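(* Let $X\subseteq\{1,\dots,n\}$, $x\in X$, and assume $n\geq 2$. Then the sequence of left $\mathcal P_n$-modules \[ 0\longrightarrow\mathcal A_{X,x}\oplus\mathcal B_{X,x}\longrightarrow\mathcal P_n/J_{X-\{x\}}\longrightarrow\mathcal P_n/J_X\longrightarrow 0, \] in which the first map is induced by the inclusions $A_x\subseteq\mathcal P_n$ and $B_{X,x}\subseteq\mathcal P_n$ and the second by the identity of $\mathcal P_n$, is exact (i.e. $\mathcal A_{X,x}\oplus\mathcal B_{X,x}\to\mathcal P_n/J_{X-\{x\}}$ is a resolution of $\mathcal P_n/J_X$). Moreover, applying $\mathbb 1\otimes_{\mathcal P_n}-$ gives a resolution of $\mathbb 1\otimes_{\mathcal P_n}\mathcal P_n/J_X$, i.e. the complex $\mathbb 1\otimes_{\mathcal P_n}(\mathcal A_{X,x}\oplus\mathcal B_{X,x})\to\mathbb 1\otimes_{\mathcal P_n}\mathcal P_n/J_{X-\{x\}}\to\mathbb 1\otimes_{\mathcal P_n}\mathcal P_n/J_X\to 0$ is exact with the leftmost map injective.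
   Context: $R$ is a commutative ring, $\delta\in R$, and $\mathcal P_n=\mathcal P_n(R,\delta)$ is the partition algebra: the free $R$-module on set partitions ("diagrams") of $\{-n,\dots,-1,1,\dots,n\}$ (negative = left nodes, positive = right nodes), with product by stacking (identifying right nodes of the first diagram with left nodes of the second), taking the induced partition on outer nodes, and multiplying by $\delta$ for each component consisting only of middle nodes. $\mathbb 1$ is the trivial right module $R$ on which permutation diagrams (all blocks of the form $\{-i,j\}$) act as the identity and other diagrams as $0$. For $Z\subseteq\{1,\dots,n\}$, $J_Z$ is the left ideal spanned by diagrams in which among the right nodes labelled by $Z$ there is a singleton block or two distinct nodes in the same block. $A_x$ is the span of diagrams in which the right node $x$ is a singleton; $B_{X,x}$ the span of diagrams in which $x$ is in the same block as another element of $X$; $\mathcal A_{X,x}=A_x/(A_x\cap J_{X-\{x\}})$ and $\mathcal B_{X,x}=B_{X,x}/(B_{X,x}\cap J_{X-\{x\}})$. *)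

theory Defs
  imports Main "HOL-Library.Disjoint_Sets" "HOL-Library.Function_Algebras" "HOL-Library.Product_Plus"
begin

text \<open>Nodes: -n..-1 (left nodes) and 1..n (right nodes), as integers.\<close>
definition pnodes :: "nat \<Rightarrow> int set" where
  "pnodes n = {i. 1 \<le> \<bar>i\<bar> \<and> \<bar>i\<bar> \<le> int n}"

definition diagrams :: "nat \<Rightarrow> int set set set" where
  "diagrams n = {d. partition_on (pnodes n) d}"

text \<open>Stacking d1 on top of d2: left nodes of d1 and right nodes of d2 become
  outer nodes (Inl v), right node j of d1 and left node -j of d2 become the
  middle node Inr j.\<close>
definition lift1 :: "int \<Rightarrow> int + int" where
  "lift1 v = (if v < 0 then Inl v else Inr v)"
definition lift2 :: "int \<Rightarrow> int + int" where
  "lift2 v = (if v < 0 then Inr (- v) else Inl v)"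

definition stack_blocks :: "int set set \<Rightarrow> int set set \<Rightarrow> (int + int) set set" where
  "stack_blocks d1 d2 = (image lift1) ` d1 \<union> (image lift2) ` d2"

definition stack_rel :: "int set set \<Rightarrow> int set set \<Rightarrow> ((int + int) \<times> (int + int)) set" where
  "stack_rel d1 d2 = {(a, b). \<exists>Bl \<in> stack_blocks d1 d2. a \<in> Bl \<and> b \<in> Bl}"

definition stack_nodes :: "nat \<Rightarrow> (int + int) set" where
  "stack_nodes n = Inl ` pnodes n \<union> Inr ` {1 .. int n}"

definition components :: "nat \<Rightarrow> int set set \<Rightarrow> int set set \<Rightarrow> (int + int) set set" where
  "components n d1 d2 = stack_nodes n // ((stack_rel d1 d2)\<^sup>*)"

definition compose :: "nat \<Rightarrow> int set set \<Rightarrow> int set set \<Rightarrow> int set set" where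
  "compose n d1 d2 = {Inl -` C | C. C \<in> components n d1 d2 \<and> C \<inter> range Inl \<noteq> {}}"

definition middle_count :: "nat \<Rightarrow> int set set \<Rightarrow> int set set \<Rightarrow> nat" where
  "middle_count n d1 d2 = card {C \<in> components n d1 d2. C \<subseteq> range Inr}"

definition PA :: "nat \<Rightarrow> (int set set \<Rightarrow> 'r::comm_ring_1) set" where
  "PA n = {f. \<forall>d. d \<notin> diagrams n \<longrightarrow> f d = 0}"

definition psmult :: "'r::comm_ring_1 \<Rightarrow> (int set set \<Rightarrow> 'r) \<Rightarrow> (int set set \<Rightarrow> 'r)" where
  "psmult r f = (\<lambda>d. r * f d)"

definition pmult :: "nat \<Rightarrow> 'r::comm_ring_1 \<Rightarrow> (int set set \<Rightarrow> 'r) \<Rightarrow> (int set set \<Rightarrow> 'r) \<Rightarrow> (int set set \<Rightarrow> 'r)" where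
  "pmult n \<delta> f g = (\<lambda>d. \<Sum>d1\<in>diagrams n. \<Sum>d2\<in>diagrams n.
      (if compose n d1 d2 = d then f d1 * g d2 * \<delta> ^ middle_count n d1 d2 else 0))"

definition span_of :: "nat \<Rightarrow> int set set set \<Rightarrow> (int set set \<Rightarrow> 'r::comm_ring_1) set" where
  "span_of n S = {f \<in> PA n. \<forall>d. d \<notin> S \<longrightarrow> f d = 0}"

definition left_submodule :: "nat \<Rightarrow> 'r::comm_ring_1 \<Rightarrow> (int set set \<Rightarrow> 'r) set \<Rightarrow> bool" where
  "left_submodule n \<delta> S \<longleftrightarrow> S \<subseteq> PA n \<and> 0 \<in> S \<and> (\<forall>u\<in>S. \<forall>v\<in>S. u + v \<in> S)
     \<and> (\<forall>r. \<forall>u\<in>S. psmult r u \<in> S) \<and> (\<forall>a\<in>PA n. \<forall>u\<in>S. pmult n \<delta> a u \<in> S)"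

definition Jdiags :: "nat \<Rightarrow> int set \<Rightarrow> int set set set" where
  "Jdiags n Z = {d \<in> diagrams n. (\<exists>z\<in>Z. {z} \<in> d) \<or>
      (\<exists>z1\<in>Z. \<exists>z2\<in>Z. z1 \<noteq> z2 \<and> (\<exists>Bl\<in>d. z1 \<in> Bl \<and> z2 \<in> Bl))}"

definition Jid :: "nat \<Rightarrow> int set \<Rightarrow> (int set set \<Rightarrow> 'r::comm_ring_1) set" where
  "Jid n Z = span_of n (Jdiags n Z)"

definition Amod :: "nat \<Rightarrow> int \<Rightarrow> (int set set \<Rightarrow> 'r::comm_ring_1) set" where
  "Amod n x = span_of n {d \<in> diagrams n. {x} \<in> d}"

definition Bmod :: "nat \<Rightarrow> int set \<Rightarrow> int \<Rightarrow> (int set set \<Rightarrow> 'r::comm_ring_1) set" where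
  "Bmod n X x = span_of n {d \<in> diagrams n. \<exists>y\<in>X. y \<noteq> x \<and> (\<exists>Bl\<in>d. x \<in> Bl \<and> y \<in> Bl)}"

definition coset :: "'m::ab_group_add set \<Rightarrow> 'm \<Rightarrow> 'm set" where
  "coset N m = (\<lambda>k. m + k) ` N"

text \<open>Quotient module M/N, as the set of cosets; its zero is the coset N.\<close>
definition quot :: "'m::ab_group_add set \<Rightarrow> 'm set \<Rightarrow> 'm set set" where
  "quot M N = coset N ` M"

definition induced :: "('m::ab_group_add \<Rightarrow> 'n::ab_group_add) \<Rightarrow> 'n set \<Rightarrow> 'm set \<Rightarrow> 'n set" where
  "induced g N2 C = coset N2 (g (SOME m. m \<in> C))"

definition setsum :: "'m::ab_group_add set \<Rightarrow> 'm set \<Rightarrow> 'm set" where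
  "setsum N K = {u + v | u v. u \<in> N \<and> v \<in> K}"

definition perm_diagram :: "nat \<Rightarrow> int set set \<Rightarrow> bool" where
  "perm_diagram n d \<longleftrightarrow> d \<in> diagrams n \<and>
     (\<forall>Bl\<in>d. \<exists>i j. 1 \<le> i \<and> i \<le> int n \<and> 1 \<le> j \<and> j \<le> int n \<and> Bl = {- i, j})"

text \<open>Action of P_n on the trivial right module R: r . a = r * eps a.\<close>
definition eps :: "nat \<Rightarrow> (int set set \<Rightarrow> 'r::comm_ring_1) \<Rightarrow> 'r" where
  "eps n f = (\<Sum>d\<in>{d. perm_diagram n d}. f d)"

text \<open>Balancing relations for 1 (x)_{P_n} M: the R-span (= additive span, since the
  set is closed under R-scalars) of all eps(a) m - a.m.\<close>
definition triv_rel :: "nat \<Rightarrow> ('r::comm_ring_1 \<Rightarrow> 'm \<Rightarrow> 'm::ab_group_add)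
     \<Rightarrow> ((int set set \<Rightarrow> 'r) \<Rightarrow> 'm \<Rightarrow> 'm) \<Rightarrow> 'm set \<Rightarrow> 'm set" where
  "triv_rel n sm act M = {(\<Sum>i<k. sm (eps n (a i)) (m i) - act (a i) (m i)) | (k::nat) a m.
      \<forall>i<k. a i \<in> PA n \<and> m i \<in> M}"

text \<open>1 (x)_{P_n} (M/N), realised as M/(N + balancing relations).\<close>
definition triv_tensor :: "nat \<Rightarrow> ('r::comm_ring_1 \<Rightarrow> 'm \<Rightarrow> 'm::ab_group_add)
     \<Rightarrow> ((int set set \<Rightarrow> 'r) \<Rightarrow> 'm \<Rightarrow> 'm) \<Rightarrow> 'm set \<Rightarrow> 'm set \<Rightarrow> 'm set" where
  "triv_tensor n sm act M N = setsum N (triv_rel n sm act M)"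

definition sm1 :: "'r::comm_ring_1 \<Rightarrow> (int set set \<Rightarrow> 'r) \<Rightarrow> (int set set \<Rightarrow> 'r)" where
  "sm1 = psmult"
definition sm2 :: "'r::comm_ring_1 \<Rightarrow> (int set set \<Rightarrow> 'r) \<times> (int set set \<Rightarrow> 'r)
     \<Rightarrow> (int set set \<Rightarrow> 'r) \<times> (int set set \<Rightarrow> 'r)" where
  "sm2 r p = (psmult r (fst p), psmult r (snd p))"
definition act2 :: "nat \<Rightarrow> 'r::comm_ring_1 \<Rightarrow> (int set set \<Rightarrow> 'r) \<Rightarrow> (int set set \<Rightarrow> 'r) \<times> (int set set \<Rightarrow> 'r)
     \<Rightarrow> (int set set \<Rightarrow> 'r) \<times> (int set set \<Rightarrow> 'r)" where
  "act2 n \<delta> a p = (pmult n \<delta> a (fst p), pmult n \<delta> a (snd p))"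

end

theory Submission
  imports Defs
begin


lemma pnodes_iff: "v \<in> pnodes n \<longleftrightarrow> 1 \<le> \<bar>v\<bar> \<and> \<bar>v\<bar> \<le> int n"
  by (simp add: pnodes_def)

lemma finite_pnodes: "finite (pnodes n)"
proof -
  have "pnodes n \<subseteq> {- int n .. int n}" by (auto simp: pnodes_def)
  then show ?thesis by (rule finite_subset) simp
qed

lemma diagrams_sub: "diagrams n \<subseteq> Pow (Pow (pnodes n))"
  by (auto simp: diagrams_def partition_on_def)

lemma finite_diagrams: "finite (diagrams n)"
  by (rule finite_subset[OF diagrams_sub]) (simp add: finite_pnodes)

lemma diag_block_sub: "d \<in> diagrams n \<Longrightarrow> Bl \<in> d \<Longrightarrow> Bl \<subseteq> pnodes n"
  by (auto simp: diagrams_def partition_on_def)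

lemma diag_cover: "d \<in> diagrams n \<Longrightarrow> v \<in> pnodes n \<Longrightarrow> \<exists>Bl\<in>d. v \<in> Bl"
  by (auto simp: diagrams_def partition_on_def)

lemma diag_disj: "d \<in> diagrams n \<Longrightarrow> B1 \<in> d \<Longrightarrow> B2 \<in> d \<Longrightarrow> v \<in> B1 \<Longrightarrow> v \<in> B2 \<Longrightarrow> B1 = B2"
  unfolding diagrams_def partition_on_def disjoint_def by blast

lemma Inl_stack: "Inl v \<in> stack_nodes n \<longleftrightarrow> v \<in> pnodes n"
  by (auto simp: stack_nodes_def)

lemma Inr_stack: "Inr v \<in> stack_nodes n \<longleftrightarrow> 1 \<le> v \<and> v \<le> int n"
  by (auto simp: stack_nodes_def)

lemma lift1_in: "v \<in> pnodes n \<Longrightarrow> lift1 v \<in> stack_nodes n"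
  by (auto simp: lift1_def Inl_stack Inr_stack pnodes_iff)

lemma lift2_in: "v \<in> pnodes n \<Longrightarrow> lift2 v \<in> stack_nodes n"
  by (auto simp: lift2_def Inl_stack Inr_stack pnodes_iff)

lemma stack_blocks_sub:
  assumes "d1 \<in> diagrams n" "d2 \<in> diagrams n" "Bl \<in> stack_blocks d1 d2"
  shows "Bl \<subseteq> stack_nodes n"
  using assms(3) unfolding stack_blocks_def
proof
  assume "Bl \<in> (`) lift1 ` d1"
  then show ?thesis using diag_block_sub[OF assms(1)] lift1_in by blast
next
  assume "Bl \<in> (`) lift2 ` d2"
  then show ?thesis using diag_block_sub[OF assms(2)] lift2_in by blast
qed

lemma rtr_closed:
  assumes "d1 \<in> diagrams n" "d2 \<in> diagrams n" "(a, b) \<in> (stack_rel d1 d2)\<^sup>*" "a \<in> stack_nodes n"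
  shows "b \<in> stack_nodes n"
  using assms(3,4)
proof (induction rule: rtrancl_induct)
  case base then show ?case by simp
next
  case (step y z)
  then obtain Bl where "Bl \<in> stack_blocks d1 d2" "z \<in> Bl" unfolding stack_rel_def by blast
  then show ?case using stack_blocks_sub[OF assms(1,2)] by blast
qed

lemma sym_stack_rel: "sym (stack_rel d1 d2)"
  unfolding stack_rel_def sym_def by blast

lemma R_sym: "(a, b) \<in> (stack_rel d1 d2)\<^sup>* \<Longrightarrow> (b, a) \<in> (stack_rel d1 d2)\<^sup>*"
  using sym_rtrancl[OF sym_stack_rel] unfolding sym_def by blast

lemma R_class_eq:
  assumes "(a, c) \<in> (stack_rel d1 d2)\<^sup>*" "(b, c) \<in> (stack_rel d1 d2)\<^sup>*"
  shows "(stack_rel d1 d2)\<^sup>* `` {a} = (stack_rel d1 d2)\<^sup>* `` {b}"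
proof -
  have ab: "(a, b) \<in> (stack_rel d1 d2)\<^sup>*" using assms R_sym rtrancl_trans by metis
  then have ba: "(b, a) \<in> (stack_rel d1 d2)\<^sup>*" using R_sym by metis
  show ?thesis
  proof (intro equalityI subsetI)
    fix z assume "z \<in> (stack_rel d1 d2)\<^sup>* `` {a}"
    then show "z \<in> (stack_rel d1 d2)\<^sup>* `` {b}" using ba by (auto intro: rtrancl_trans)
  next
    fix z assume "z \<in> (stack_rel d1 d2)\<^sup>* `` {b}"
    then show "z \<in> (stack_rel d1 d2)\<^sup>* `` {a}" using ab by (auto intro: rtrancl_trans)
  qed
qed

lemma compose_eq:
  "compose n d1 d2 = {Inl -` ((stack_rel d1 d2)\<^sup>* `` {a}) | a. a \<in> stack_nodes n \<and>
      ((stack_rel d1 d2)\<^sup>* `` {a}) \<inter> range Inl \<noteq> {}}"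
  unfolding compose_def components_def quotient_def by auto

lemma compose_memI:
  "a \<in> stack_nodes n \<Longrightarrow> ((stack_rel d1 d2)\<^sup>* `` {a}) \<inter> range Inl \<noteq> {}
   \<Longrightarrow> Inl -` ((stack_rel d1 d2)\<^sup>* `` {a}) \<in> compose n d1 d2"
  unfolding compose_eq by blast

lemma compose_memE:
  assumes "p \<in> compose n d1 d2"
  obtains a where "a \<in> stack_nodes n" "((stack_rel d1 d2)\<^sup>* `` {a}) \<inter> range Inl \<noteq> {}"
    "p = Inl -` ((stack_rel d1 d2)\<^sup>* `` {a})"
  using assms unfolding compose_eq by blast

lemma compose_diagram:
  assumes d1: "d1 \<in> diagrams n" and d2: "d2 \<in> diagrams n"
  shows "compose n d1 d2 \<in> diagrams n"
proof -
  let ?R = "(stack_rel d1 d2)\<^sup>*"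
  have U: "\<Union>(compose n d1 d2) = pnodes n"
  proof
    show "\<Union>(compose n d1 d2) \<subseteq> pnodes n"
    proof
      fix v assume "v \<in> \<Union>(compose n d1 d2)"
      then obtain p where "p \<in> compose n d1 d2" "v \<in> p" by blast
      then obtain a where "a \<in> stack_nodes n" "(a, Inl v) \<in> ?R" by (auto elim: compose_memE)
      then have "Inl v \<in> stack_nodes n" using rtr_closed[OF d1 d2] by blast
      then show "v \<in> pnodes n" by (simp add: Inl_stack)
    qed
  next
    show "pnodes n \<subseteq> \<Union>(compose n d1 d2)"
    proof
      fix v assume v: "v \<in> pnodes n"
      then have "Inl v \<in> stack_nodes n" by (simp add: Inl_stack)
      moreover have "Inl v \<in> ?R `` {Inl v}" by simp
      ultimately have "Inl -` (?R `` {Inl v}) \<in> compose n d1 d2"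
        by (intro compose_memI) auto
      moreover have "v \<in> Inl -` (?R `` {Inl v})" by simp
      ultimately show "v \<in> \<Union>(compose n d1 d2)" by blast
    qed
  qed
  have D: "disjnt p q" if pq: "p \<in> compose n d1 d2" "q \<in> compose n d1 d2" "p \<noteq> q" for p q
  proof -
    obtain a where a: "p = Inl -` (?R `` {a})" by (metis compose_memE[OF pq(1)])
    obtain b where b: "q = Inl -` (?R `` {b})" by (metis compose_memE[OF pq(2)])
    show ?thesis
    proof (rule ccontr)
      assume "\<not> disjnt p q"
      then obtain v where "v \<in> p" "v \<in> q" unfolding disjnt_def by blast
      then have "(a, Inl v) \<in> ?R" "(b, Inl v) \<in> ?R" using a b by auto
      then have "?R `` {a} = ?R `` {b}" by (rule R_class_eq)
      then show False using a b pq(3) by simp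
    qed
  qed
  have E: "{} \<notin> compose n d1 d2"
  proof
    assume "{} \<in> compose n d1 d2"
    then obtain a where "?R `` {a} \<inter> range Inl \<noteq> {}" "{} = Inl -` (?R `` {a})"
      by (auto elim: compose_memE)
    then show False by blast
  qed
  show ?thesis unfolding diagrams_def using partition_onI[OF U D E] by simp
qed

lemma lift1_Inl: "lift1 v = Inl z \<Longrightarrow> v < 0 \<and> v = z"
  by (auto simp: lift1_def split: if_splits)

lemma lift2_Inl: "lift2 v = Inl z \<Longrightarrow> v \<ge> 0 \<and> v = z"
  by (auto simp: lift2_def split: if_splits)

lemma lift2_pos: "z > 0 \<Longrightarrow> lift2 z = Inl z"
  by (simp add: lift2_def)

lemma compose_singleton:
  assumes d1: "d1 \<in> diagrams n" and d2: "d2 \<in> diagrams n" and z: "{z} \<in> d2" "z > 0"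
  shows "{z} \<in> compose n d1 d2"
proof -
  let ?R = "(stack_rel d1 d2)\<^sup>*"
  have zp: "z \<in> pnodes n" using diag_block_sub[OF d2 z(1)] by simp
  have cl: "b = Inl z" if "(Inl z, b) \<in> ?R" for b
    using that
  proof (induction rule: rtrancl_induct)
    case base then show ?case by simp
  next
    case (step y c)
    then obtain Bl where Bl: "Bl \<in> stack_blocks d1 d2" "Inl z \<in> Bl" "c \<in> Bl"
      unfolding stack_rel_def by blast
    show ?case using Bl(1) unfolding stack_blocks_def
    proof
      assume "Bl \<in> (`) lift1 ` d1"
      then obtain B1 where "Bl = lift1 ` B1" by blast
      then obtain v where "Inl z = lift1 v" using Bl(2) by blast
      then show ?thesis using lift1_Inl[of v z] z(2) by simp
    next
      assume "Bl \<in> (`) lift2 ` d2"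
      then obtain B2 where B2: "B2 \<in> d2" "Bl = lift2 ` B2" by blast
      then obtain v where "v \<in> B2" "Inl z = lift2 v" using Bl(2) by blast
      then have "z \<in> B2" using lift2_Inl[of v z] by simp
      then have "B2 = {z}" using diag_disj[OF d2 B2(1) z(1)] by simp
      then show ?thesis using B2 Bl(3) lift2_pos[OF z(2)] by simp
    qed
  qed
  have "?R `` {Inl z} = {Inl z}" using cl by auto
  moreover have "Inl -` ((?R `` {Inl z})) \<in> compose n d1 d2"
    by (rule compose_memI) (auto simp: Inl_stack zp)
  moreover have "Inl -` {Inl z} = {z}" by auto
  ultimately show ?thesis by metis
qed

lemma compose_pair:
  assumes d1: "d1 \<in> diagrams n" and d2: "d2 \<in> diagrams n" and B2: "B2 \<in> d2"
    and z: "z1 \<in> B2" "z2 \<in> B2" "z1 > 0" "z2 > 0"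
  shows "\<exists>Bl\<in>compose n d1 d2. z1 \<in> Bl \<and> z2 \<in> Bl"
proof -
  let ?R = "(stack_rel d1 d2)\<^sup>*"
  have zp: "z1 \<in> pnodes n" using diag_block_sub[OF d2 B2] z by auto
  have L: "lift2 ` B2 \<in> stack_blocks d1 d2" using B2 unfolding stack_blocks_def by blast
  have "Inl z1 = lift2 z1" "Inl z2 = lift2 z2" using z(3,4) by (simp_all add: lift2_pos)
  then have "Inl z1 \<in> lift2 ` B2" "Inl z2 \<in> lift2 ` B2" using z(1,2) by auto
  then have "(Inl z1, Inl z2) \<in> stack_rel d1 d2" using L unfolding stack_rel_def by blast
  then have A: "z2 \<in> Inl -` (?R `` {Inl z1})" by simp
  have B: "z1 \<in> Inl -` (?R `` {Inl z1})" by simp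
  have M: "Inl -` ((?R `` {Inl z1})) \<in> compose n d1 d2"
    by (rule compose_memI) (auto simp: Inl_stack zp)
  show ?thesis
  proof (rule bexI[where x = "Inl -` (?R `` {Inl z1})"])
    show "z1 \<in> Inl -` (?R `` {Inl z1}) \<and> z2 \<in> Inl -` (?R `` {Inl z1})" using A B by (rule conjI[rotated])
  qed (rule M)
qed

lemma compose_id:
  assumes d1: "d1 \<in> diagrams n" and d2: "d2 \<in> diagrams n"
    and h0: "\<And>v. \<phi> (Inl v) = v"
    and h3: "\<And>a. a \<in> stack_nodes n \<Longrightarrow> \<phi> a \<in> pnodes n"
    and h1: "\<And>Bl. Bl \<in> stack_blocks d1 d2 \<Longrightarrow> \<exists>D\<in>d1. \<phi> ` Bl \<subseteq> D"
    and h2: "\<And>a. a \<in> stack_nodes n \<Longrightarrow> (a, lift1 (\<phi> a)) \<in> (stack_rel d1 d2)\<^sup>* \<or>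
              (\<forall>b\<in>stack_nodes n. (\<exists>D\<in>d1. \<phi> a \<in> D \<and> \<phi> b \<in> D) \<longrightarrow> b = a)"
  shows "compose n d1 d2 = d1 \<and> middle_count n d1 d2 = 0"
proof -
  let ?R = "(stack_rel d1 d2)\<^sup>*"
  let ?S = "stack_nodes n"
  have fwd: "\<exists>D\<in>d1. \<phi> a \<in> D \<and> \<phi> b \<in> D" if "a \<in> ?S" "(a, b) \<in> ?R" for a b
    using that(2)
  proof (induction rule: rtrancl_induct)
    case base
    then show ?case using diag_cover[OF d1 h3[OF that(1)]] by blast
  next
    case (step y c)
    then obtain D where D: "D \<in> d1" "\<phi> a \<in> D" "\<phi> y \<in> D" by blast
    obtain Bl where Bl: "Bl \<in> stack_blocks d1 d2" "y \<in> Bl" "c \<in> Bl"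
      using step(2) unfolding stack_rel_def by blast
    obtain D' where D': "D' \<in> d1" "\<phi> ` Bl \<subseteq> D'" using h1[OF Bl(1)] by blast
    have "\<phi> y \<in> D'" "\<phi> c \<in> D'" using D'(2) Bl(2,3) by auto
    then have "D' = D" using diag_disj[OF d1 D'(1) D(1)] D(3) by blast
    then show ?case using D `\<phi> c \<in> D'` by blast
  qed
  have bwd: "(a, b) \<in> ?R" if ab: "a \<in> ?S" "b \<in> ?S" and D: "D \<in> d1" "\<phi> a \<in> D" "\<phi> b \<in> D" for a b D
  proof (cases "(a, lift1 (\<phi> a)) \<in> ?R")
    case ra: True
    show ?thesis
    proof (cases "(b, lift1 (\<phi> b)) \<in> ?R")
      case rb: True
      have "lift1 ` D \<in> stack_blocks d1 d2" using D(1) unfolding stack_blocks_def by blast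
      then have "(lift1 (\<phi> a), lift1 (\<phi> b)) \<in> stack_rel d1 d2"
        using D(2,3) unfolding stack_rel_def by blast
      then have "(lift1 (\<phi> a), lift1 (\<phi> b)) \<in> ?R" by blast
      moreover have "(lift1 (\<phi> b), b) \<in> ?R" using rb R_sym by metis
      ultimately show ?thesis using ra by (meson rtrancl_trans)
    next
      case False
      then have "\<forall>c\<in>?S. (\<exists>D\<in>d1. \<phi> b \<in> D \<and> \<phi> c \<in> D) \<longrightarrow> c = b" using h2[OF ab(2)] by blast
      then have "a = b" using ab D by blast
      then show ?thesis by simp
    qed
  next
    case False
    then have "\<forall>c\<in>?S. (\<exists>D\<in>d1. \<phi> a \<in> D \<and> \<phi> c \<in> D) \<longrightarrow> c = a" using h2[OF ab(1)] by blast
    then have "b = a" using ab D by blast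
    then show ?thesis by simp
  qed
  have cls: "?R `` {a} = {b \<in> ?S. \<phi> b \<in> D}" if a: "a \<in> ?S" and D: "D \<in> d1" "\<phi> a \<in> D" for a D
  proof (intro equalityI subsetI)
    fix b assume "b \<in> ?R `` {a}"
    then have b: "(a, b) \<in> ?R" by simp
    then have bS: "b \<in> ?S" using rtr_closed[OF d1 d2 _ a] by blast
    obtain D' where D': "D' \<in> d1" "\<phi> a \<in> D'" "\<phi> b \<in> D'" using fwd[OF a b] by blast
    then have "D' = D" using diag_disj[OF d1 D'(1) D(1)] D(2) by blast
    then show "b \<in> {b \<in> ?S. \<phi> b \<in> D}" using bS D' by blast
  next
    fix b assume "b \<in> {b \<in> ?S. \<phi> b \<in> D}"
    then have "b \<in> ?S" "\<phi> b \<in> D" by auto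
    then show "b \<in> ?R `` {a}" using bwd[OF a _ D] by blast
  qed
  have pre: "Inl -` {b \<in> ?S. \<phi> b \<in> D} = D" if D: "D \<in> d1" for D
    using diag_block_sub[OF d1 D] by (auto simp: Inl_stack h0)
  have C1: "compose n d1 d2 \<subseteq> d1"
  proof
    fix p assume "p \<in> compose n d1 d2"
    then obtain a where a: "a \<in> ?S" "p = Inl -` (?R `` {a})" by (metis compose_memE)
    obtain D where D: "D \<in> d1" "\<phi> a \<in> D" using diag_cover[OF d1 h3[OF a(1)]] by blast
    have "p = D" using a(2) cls[OF a(1) D] pre[OF D(1)] by simp
    then show "p \<in> d1" using D by simp
  qed
  have C2: "d1 \<subseteq> compose n d1 d2"
  proof
    fix D assume D: "D \<in> d1"
    have "D \<noteq> {}" using D d1 unfolding diagrams_def partition_on_def by blast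
    then obtain v where v: "v \<in> D" by blast
    have vS: "Inl v \<in> ?S" using diag_block_sub[OF d1 D] v by (simp add: Inl_stack subset_iff)
    have D2: "\<phi> (Inl v) \<in> D" using v h0 by simp
    have "Inl v \<in> ?R `` {Inl v}" by simp
    then have "?R `` {Inl v} \<inter> range Inl \<noteq> {}" by blast
    then have "Inl -` (?R `` {Inl v}) \<in> compose n d1 d2" using compose_memI vS by metis
    then show "D \<in> compose n d1 d2" using cls[OF vS D D2] pre[OF D] by simp
  qed
  have M: "{C \<in> components n d1 d2. C \<subseteq> range Inr} = {}"
  proof (rule ccontr)
    assume "{C \<in> components n d1 d2. C \<subseteq> range Inr} \<noteq> {}"
    then obtain C where C: "C \<in> components n d1 d2" "C \<subseteq> range Inr" by blast
    then obtain a where a: "a \<in> ?S" "C = ?R `` {a}" unfolding components_def quotient_def by blast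
    obtain D where D: "D \<in> d1" "\<phi> a \<in> D" using diag_cover[OF d1 h3[OF a(1)]] by blast
    have "Inl (\<phi> a) \<in> ?S" using h3[OF a(1)] by (simp add: Inl_stack)
    then have "Inl (\<phi> a) \<in> C" using a(2) cls[OF a(1) D] D(2) h0 by simp
    then show False using C(2) by blast
  qed
  have "middle_count n d1 d2 = 0" unfolding middle_count_def M by simp
  then show ?thesis using C1 C2 by blast
qed

definition eA :: "nat \<Rightarrow> int \<Rightarrow> int \<Rightarrow> int set set" where
  "eA n x y = {{-x,-y,y},{x}} \<union> {{-i,i} | i. 1 \<le> i \<and> i \<le> int n \<and> i \<noteq> x \<and> i \<noteq> y}"

definition eB :: "nat \<Rightarrow> int \<Rightarrow> int \<Rightarrow> int set set" where
  "eB n x y = {{-x},{-y,y,x}} \<union> {{-i,i} | i. 1 \<le> i \<and> i \<le> int n \<and> i \<noteq> x \<and> i \<noteq> y}"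

lemma eA_diagram:
  assumes "1 \<le> x" "x \<le> int n" "1 \<le> y" "y \<le> int n" "x \<noteq> y"
  shows "eA n x y \<in> diagrams n"
proof -
  have U: "\<Union>(eA n x y) = pnodes n"
  proof (intro equalityI subsetI)
    fix v assume "v \<in> \<Union>(eA n x y)"
    then show "v \<in> pnodes n" using assms unfolding eA_def pnodes_def by auto
  next
    fix v assume v: "v \<in> pnodes n"
    show "v \<in> \<Union>(eA n x y)"
    proof (cases "v = x \<or> v = -x \<or> v = y \<or> v = -y")
      case True then show ?thesis unfolding eA_def by auto
    next
      case False
      then have "{-\<bar>v\<bar>, \<bar>v\<bar>} \<in> eA n x y" using v assms unfolding eA_def pnodes_def by auto
      moreover have "v \<in> {-\<bar>v\<bar>, \<bar>v\<bar>}" by (cases "v \<ge> 0") auto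
      ultimately show ?thesis by blast
    qed
  qed
  have D: "disjnt p q" if "p \<in> eA n x y" "q \<in> eA n x y" "p \<noteq> q" for p q
    using that assms unfolding eA_def disjnt_def by auto
  have E: "{} \<notin> eA n x y" unfolding eA_def by auto
  show ?thesis unfolding diagrams_def using partition_onI[OF U D E] by simp
qed

lemma eB_diagram:
  assumes "1 \<le> x" "x \<le> int n" "1 \<le> y" "y \<le> int n" "x \<noteq> y"
  shows "eB n x y \<in> diagrams n"
proof -
  have U: "\<Union>(eB n x y) = pnodes n"
  proof (intro equalityI subsetI)
    fix v assume "v \<in> \<Union>(eB n x y)"
    then show "v \<in> pnodes n" using assms unfolding eB_def pnodes_def by auto
  next
    fix v assume v: "v \<in> pnodes n"
    show "v \<in> \<Union>(eB n x y)"
    proof (cases "v = x \<or> v = -x \<or> v = y \<or> v = -y")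
      case True then show ?thesis unfolding eB_def by auto
    next
      case False
      then have "{-\<bar>v\<bar>, \<bar>v\<bar>} \<in> eB n x y" using v assms unfolding eB_def pnodes_def by auto
      moreover have "v \<in> {-\<bar>v\<bar>, \<bar>v\<bar>}" by (cases "v \<ge> 0") auto
      ultimately show ?thesis by blast
    qed
  qed
  have D: "disjnt p q" if "p \<in> eB n x y" "q \<in> eB n x y" "p \<noteq> q" for p q
    using that assms unfolding eB_def disjnt_def by auto
  have E: "{} \<notin> eB n x y" unfolding eB_def by auto
  show ?thesis unfolding diagrams_def using partition_onI[OF U D E] by simp
qed

lemma lift1_pos: "v > 0 \<Longrightarrow> lift1 v = Inr v" by (simp add: lift1_def)
lemma lift1_neg: "v < 0 \<Longrightarrow> lift1 v = Inl v" by (simp add: lift1_def)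
lemma lift2_neg: "v < 0 \<Longrightarrow> lift2 v = Inr (- v)" by (simp add: lift2_def)

lemma sb1: "B \<in> d1 \<Longrightarrow> lift1 ` B \<in> stack_blocks d1 d2" unfolding stack_blocks_def by blast
lemma sb2: "B \<in> d2 \<Longrightarrow> lift2 ` B \<in> stack_blocks d1 d2" unfolding stack_blocks_def by blast

lemma sr_block: "Bl \<in> stack_blocks d1 d2 \<Longrightarrow> a \<in> Bl \<Longrightarrow> b \<in> Bl \<Longrightarrow> (a, b) \<in> (stack_rel d1 d2)\<^sup>*"
  unfolding stack_rel_def by blast

lemma pnodes_nz: "v \<in> pnodes n \<Longrightarrow> v < 0 \<or> v > 0" by (auto simp: pnodes_def)

lemma lift2_xyy: "x > 0 \<Longrightarrow> y > 0 \<Longrightarrow> lift2 ` {-x,-y,y} = {Inr x, Inr y, Inl y}"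
  by (simp add: lift2_neg lift2_pos)

lemma lift2_ii: "i > 0 \<Longrightarrow> lift2 ` {-i,i} = {Inr i, Inl i}"
  by (simp add: lift2_neg lift2_pos)

lemma sr_block2: "B \<in> d2 \<Longrightarrow> lift2 ` B = Bl \<Longrightarrow> a \<in> Bl \<Longrightarrow> b \<in> Bl \<Longrightarrow> (a, b) \<in> (stack_rel d1 d2)\<^sup>*"
  using sr_block[OF sb2] by blast

lemma comp_eA:
  assumes d: "d \<in> diagrams n" and dx: "{x} \<in> d"
    and xy: "1 \<le> x" "x \<le> int n" "1 \<le> y" "y \<le> int n" "x \<noteq> y"
  shows "compose n d (eA n x y) = d \<and> middle_count n d (eA n x y) = 0"
proof -
  define \<phi> where "\<phi> = (\<lambda>a::int+int. case a of Inl v \<Rightarrow> v | Inr i \<Rightarrow> if i = x then y else i)"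
  have e: "eA n x y \<in> diagrams n" using eA_diagram[OF xy] .
  have xp: "x > 0" "y > 0" using xy by auto
  have ypn: "y \<in> pnodes n" using xy by (simp add: pnodes_iff)
  obtain Dy where Dy: "Dy \<in> d" "y \<in> Dy" using diag_cover[OF d ypn] by blast
  have bxyy: "{-x,-y,y} \<in> eA n x y" unfolding eA_def by simp
  have bx: "{x} \<in> eA n x y" unfolding eA_def by simp
  have bii: "{-i,i} \<in> eA n x y" if "1 \<le> i" "i \<le> int n" "i \<noteq> x" "i \<noteq> y" for i
    using that unfolding eA_def by blast
  show ?thesis
  proof (rule compose_id[OF d e, of \<phi>])
    show "\<And>v. \<phi> (Inl v) = v" by (simp add: \<phi>_def)
  next
    fix a assume "a \<in> stack_nodes n"
    then show "\<phi> a \<in> pnodes n" using ypn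
      by (cases a) (auto simp: \<phi>_def Inl_stack Inr_stack pnodes_iff)
  next
    fix Bl assume Bl: "Bl \<in> stack_blocks d (eA n x y)"
    then consider (c1) B1 where "B1 \<in> d" "Bl = lift1 ` B1" | (c2) B2 where "B2 \<in> eA n x y" "Bl = lift2 ` B2"
      unfolding stack_blocks_def by blast
    then show "\<exists>D\<in>d. \<phi> ` Bl \<subseteq> D"
    proof cases
      case c1
      show ?thesis
      proof (cases "x \<in> B1")
        case True
        then have "B1 = {x}" using diag_disj[OF d c1(1) dx] by simp
        moreover have "lift1 x = Inr x" by (simp add: lift1_pos[OF xp(1)])
        ultimately have "\<phi> ` Bl = {y}" using c1(2) by (simp add: \<phi>_def)
        then show ?thesis using Dy by (intro bexI[of _ Dy]) auto
      next
        case False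
        have "\<phi> (lift1 v) = v" if "v \<in> B1" for v
        proof -
          have "v \<in> pnodes n" using diag_block_sub[OF d c1(1)] that by blast
          then consider "v < 0" | "v > 0" using pnodes_nz by blast
          then show ?thesis using False that by cases (auto simp: lift1_pos lift1_neg \<phi>_def)
        qed
        then have "\<phi> ` Bl \<subseteq> B1" using c1(2) by auto
        then show ?thesis using c1(1) by (intro bexI[of _ B1]) auto
      qed
    next
      case c2
      then consider "B2 = {-x,-y,y}" | "B2 = {x}" | i where "B2 = {-i,i}" "1 \<le> i" "i \<le> int n" "i \<noteq> x" "i \<noteq> y"
        unfolding eA_def by blast
      then show ?thesis
      proof cases
        case 1
        then have "Bl = {Inr x, Inr y, Inl y}" using c2(2) lift2_xyy[OF xp] by simp
        then have "\<phi> ` Bl = {y}" by (simp add: \<phi>_def)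
        then show ?thesis using Dy by (intro bexI[of _ Dy]) auto
      next
        case 2
        then have "\<phi> ` Bl = {x}" using c2(2) xy by (simp add: lift2_pos[OF xp(1)] \<phi>_def)
        then show ?thesis using dx by (intro bexI[of _ "{x}"]) auto
      next
        case 3
        have "i > 0" using 3 by simp
        then have "Bl = {Inr i, Inl i}" using c2(2) 3 lift2_ii by simp
        then have "\<phi> ` Bl = {i}" using 3 by (simp add: \<phi>_def)
        moreover have "i \<in> pnodes n" using 3 by (simp add: pnodes_iff)
        moreover obtain Di where "Di \<in> d" "i \<in> Di" using diag_cover[OF d] calculation(2) by blast
        ultimately show ?thesis by (intro bexI[of _ Di]) auto
      qed
    qed
  next
    fix a assume aS: "a \<in> stack_nodes n"
    let ?R = "(stack_rel d (eA n x y))\<^sup>*"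
    show "(a, lift1 (\<phi> a)) \<in> ?R \<or>
        (\<forall>b\<in>stack_nodes n. (\<exists>D\<in>d. \<phi> a \<in> D \<and> \<phi> b \<in> D) \<longrightarrow> b = a)"
    proof (cases a)
      case (Inl v)
      then have vp: "v \<in> pnodes n" using aS by (simp add: Inl_stack)
      consider "v < 0" | "v > 0 \<and> v = x" | "v > 0 \<and> v = y" | "v > 0 \<and> v \<noteq> x \<and> v \<noteq> y"
        using pnodes_nz[OF vp] by blast
      then show ?thesis
      proof cases
        case 1 then show ?thesis using Inl by (simp add: \<phi>_def lift1_neg)
      next
        case 2
        have "b = a" if "b \<in> stack_nodes n" "D \<in> d" "\<phi> a \<in> D" "\<phi> b \<in> D" for b D
        proof -
          have "D = {x}" using diag_disj[OF d that(2) dx] that(3) Inl 2 by (simp add: \<phi>_def)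
          then have "\<phi> b = x" using that(4) by simp
          then show "b = a" using Inl 2 xy by (cases b) (auto simp: \<phi>_def split: if_splits)
        qed
        then show ?thesis by blast
      next
        case 3
        have "(Inl y, Inr y) \<in> ?R"
          by (rule sr_block2[OF bxyy lift2_xyy[OF xp]]) auto
        then show ?thesis using Inl 3 by (simp add: \<phi>_def lift1_pos[OF xp(2)])
      next
        case 4
        have "v \<le> int n" using vp 4 by (simp add: pnodes_iff)
        then have "(Inl v, Inr v) \<in> ?R"
          using 4 by (intro sr_block2[OF bii[of v] lift2_ii]) auto
        then show ?thesis using Inl 4 by (simp add: \<phi>_def lift1_pos)
      qed
    next
      case (Inr i)
      then have ip: "1 \<le> i" "i \<le> int n" using aS by (simp_all add: Inr_stack)
      show ?thesis
      proof (cases "i = x")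
        case True
        have "(Inr x, Inr y) \<in> ?R"
          by (rule sr_block2[OF bxyy lift2_xyy[OF xp]]) auto
        then show ?thesis using Inr True xy by (simp add: \<phi>_def lift1_pos[OF xp(2)])
      next
        case False
        have "i > 0" using ip by simp
        then show ?thesis using Inr False by (simp add: \<phi>_def lift1_pos)
      qed
    qed
  qed
qed

lemma lift2_yyx: "x > 0 \<Longrightarrow> y > 0 \<Longrightarrow> lift2 ` {-y,y,x} = {Inr y, Inl y, Inl x}"
  by (simp add: lift2_neg lift2_pos)

lemma lift2_mx: "x > 0 \<Longrightarrow> lift2 ` {-x} = {Inr x}"
  by (simp add: lift2_neg)

lemma comp_eB:
  assumes d: "d \<in> diagrams n" and B0: "B0 \<in> d" "x \<in> B0" "y \<in> B0"
    and xy: "1 \<le> x" "x \<le> int n" "1 \<le> y" "y \<le> int n" "x \<noteq> y"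
  shows "compose n d (eB n x y) = d \<and> middle_count n d (eB n x y) = 0"
proof -
  define \<phi> where "\<phi> = (\<lambda>a::int+int. case a of Inl v \<Rightarrow> v | Inr i \<Rightarrow> i)"
  have e: "eB n x y \<in> diagrams n" using eB_diagram[OF xy] .
  have xp: "x > 0" "y > 0" using xy by auto
  have xpn: "x \<in> pnodes n" using xy by (simp add: pnodes_iff)
  obtain Dx where Dx: "Dx \<in> d" "x \<in> Dx" using diag_cover[OF d xpn] by blast
  have byyx: "{-y,y,x} \<in> eB n x y" unfolding eB_def by simp
  have bx: "{-x} \<in> eB n x y" unfolding eB_def by simp
  have bii: "{-i,i} \<in> eB n x y" if "1 \<le> i" "i \<le> int n" "i \<noteq> x" "i \<noteq> y" for i
    using that unfolding eB_def by blast
  have l1: "\<phi> (lift1 v) = v" if vp: "v \<in> pnodes n" for v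
  proof -
    consider "v < 0" | "v > 0" using pnodes_nz[OF vp] by blast
    then show ?thesis by cases (auto simp: lift1_pos lift1_neg \<phi>_def)
  qed
  show ?thesis
  proof (rule compose_id[OF d e, of \<phi>])
    show "\<And>v. \<phi> (Inl v) = v" by (simp add: \<phi>_def)
  next
    fix a assume "a \<in> stack_nodes n"
    then show "\<phi> a \<in> pnodes n"
      by (cases a) (auto simp: \<phi>_def Inl_stack Inr_stack pnodes_iff)
  next
    fix Bl assume Bl: "Bl \<in> stack_blocks d (eB n x y)"
    then consider (c1) B1 where "B1 \<in> d" "Bl = lift1 ` B1" | (c2) B2 where "B2 \<in> eB n x y" "Bl = lift2 ` B2"
      unfolding stack_blocks_def by blast
    then show "\<exists>D\<in>d. \<phi> ` Bl \<subseteq> D"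
    proof cases
      case c1
      have "\<phi> ` Bl \<subseteq> B1" using c1(2) l1 diag_block_sub[OF d c1(1)] by auto
      then show ?thesis using c1(1) by (intro bexI[of _ B1]) auto
    next
      case c2
      then consider "B2 = {-y,y,x}" | "B2 = {-x}" | i where "B2 = {-i,i}" "1 \<le> i" "i \<le> int n" "i \<noteq> x" "i \<noteq> y"
        unfolding eB_def by blast
      then show ?thesis
      proof cases
        case 1
        then have "Bl = {Inr y, Inl y, Inl x}" using c2(2) lift2_yyx[OF xp] by simp
        then have "\<phi> ` Bl \<subseteq> B0" using B0 by (simp add: \<phi>_def)
        then show ?thesis using B0 by (intro bexI[of _ B0]) auto
      next
        case 2
        then have "Bl = {Inr x}" using c2(2) lift2_mx[OF xp(1)] by simp
        then have "\<phi> ` Bl = {x}" by (simp add: \<phi>_def)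
        then show ?thesis using Dx by (intro bexI[of _ Dx]) auto
      next
        case 3
        have "i > 0" using 3 by simp
        then have "Bl = {Inr i, Inl i}" using c2(2) 3 lift2_ii by simp
        then have "\<phi> ` Bl = {i}" using 3 by (simp add: \<phi>_def)
        moreover have "i \<in> pnodes n" using 3 by (simp add: pnodes_iff)
        moreover obtain Di where "Di \<in> d" "i \<in> Di" using diag_cover[OF d] calculation(2) by blast
        ultimately show ?thesis by (intro bexI[of _ Di]) auto
      qed
    qed
  next
    fix a assume aS: "a \<in> stack_nodes n"
    let ?R = "(stack_rel d (eB n x y))\<^sup>*"
    have "(a, lift1 (\<phi> a)) \<in> ?R"
    proof (cases a)
      case (Inl v)
      then have vp: "v \<in> pnodes n" using aS by (simp add: Inl_stack)
      consider "v < 0" | "v > 0 \<and> v = x" | "v > 0 \<and> v = y" | "v > 0 \<and> v \<noteq> x \<and> v \<noteq> y"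
        using pnodes_nz[OF vp] by blast
      then show ?thesis
      proof cases
        case 1 then show ?thesis using Inl by (simp add: \<phi>_def lift1_neg)
      next
        case 2
        have r1: "(Inl x, Inr y) \<in> ?R"
          by (rule sr_block2[OF byyx lift2_yyx[OF xp]]) auto
        have "lift1 ` B0 \<in> stack_blocks d (eB n x y)" using sb1[OF B0(1)] .
        moreover have "Inr y \<in> lift1 ` B0" "Inr x \<in> lift1 ` B0"
          using B0(2,3) lift1_pos[OF xp(1)] lift1_pos[OF xp(2)] by (metis image_eqI)+
        ultimately have r2: "(Inr y, Inr x) \<in> ?R" by (rule sr_block)
        have "(Inl x, Inr x) \<in> ?R" using r1 r2 by (rule rtrancl_trans)
        then show ?thesis using Inl 2 by (simp add: \<phi>_def lift1_pos[OF xp(1)])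
      next
        case 3
        have "(Inl y, Inr y) \<in> ?R"
          by (rule sr_block2[OF byyx lift2_yyx[OF xp]]) auto
        then show ?thesis using Inl 3 by (simp add: \<phi>_def lift1_pos[OF xp(2)])
      next
        case 4
        have "v \<le> int n" using vp 4 by (simp add: pnodes_iff)
        then have "(Inl v, Inr v) \<in> ?R"
          using 4 by (intro sr_block2[OF bii[of v] lift2_ii]) auto
        then show ?thesis using Inl 4 by (simp add: \<phi>_def lift1_pos)
      qed
    next
      case (Inr i)
      then have ip: "1 \<le> i" "i \<le> int n" using aS by (simp_all add: Inr_stack)
      have "i > 0" using ip by simp
      then show ?thesis using Inr by (simp add: \<phi>_def lift1_pos)
    qed
    then show "(a, lift1 (\<phi> a)) \<in> ?R \<or>
        (\<forall>b\<in>stack_nodes n. (\<exists>D\<in>d. \<phi> a \<in> D \<and> \<phi> b \<in> D) \<longrightarrow> b = a)" by blast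
  qed
qed




definition ind :: "int set set \<Rightarrow> int set set \<Rightarrow> 'r::comm_ring_1" where
  "ind d = (\<lambda>d'. if d' = d then 1 else 0)"

lemma pmult_ind:
  assumes d1: "d1 \<in> diagrams n" and d2: "d2 \<in> diagrams n"
  shows "pmult n \<delta> (psmult r (ind d1)) (psmult s (ind d2))
    = psmult (r * s * \<delta> ^ middle_count n d1 d2) (ind (compose n d1 d2))"
proof
  fix d
  have "pmult n \<delta> (psmult r (ind d1)) (psmult s (ind d2)) d =
     (\<Sum>e1\<in>diagrams n. \<Sum>e2\<in>diagrams n.
        (if e1 = d1 then (if e2 = d2 then (if compose n d1 d2 = d then r * s * \<delta> ^ middle_count n d1 d2 else 0) else 0) else 0))"
    unfolding pmult_def psmult_def ind_def by (intro sum.cong refl) auto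
  also have "\<dots> = (\<Sum>e1\<in>diagrams n. (if e1 = d1 then (if compose n d1 d2 = d then r * s * \<delta> ^ middle_count n d1 d2 else 0) else 0))"
  proof (intro sum.cong refl)
    fix e1
    show "(\<Sum>e2\<in>diagrams n. (if e1 = d1 then (if e2 = d2 then (if compose n d1 d2 = d then r * s * \<delta> ^ middle_count n d1 d2 else 0) else 0) else 0))
      = (if e1 = d1 then (if compose n d1 d2 = d then r * s * \<delta> ^ middle_count n d1 d2 else 0) else 0)"
      by (cases "e1 = d1") (simp_all add: d2 finite_diagrams)
  qed
  also have "\<dots> = (if compose n d1 d2 = d then r * s * \<delta> ^ middle_count n d1 d2 else 0)"
    by (simp add: d1 finite_diagrams)
  also have "\<dots> = psmult (r * s * \<delta> ^ middle_count n d1 d2) (ind (compose n d1 d2)) d"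
    unfolding psmult_def ind_def by auto
  finally show "pmult n \<delta> (psmult r (ind d1)) (psmult s (ind d2)) d =
      psmult (r * s * \<delta> ^ middle_count n d1 d2) (ind (compose n d1 d2)) d" .
qed

lemma pmult_zero: "pmult n \<delta> a 0 = 0"
  unfolding pmult_def by (rule ext) (simp cong: if_cong)

lemma pmult_smult_left: "pmult n \<delta> (psmult r a) m = psmult r (pmult n \<delta> a m)"
  unfolding pmult_def psmult_def by (rule ext) (auto simp: sum_distrib_left mult.assoc intro!: sum.cong)

lemma eps_smult: "eps n (psmult r f) = r * eps n f"
  unfolding eps_def psmult_def by (simp add: sum_distrib_left)

lemma eps_ind_nonperm: "\<not> perm_diagram n e \<Longrightarrow> eps n (psmult r (ind e)) = 0"
  unfolding eps_def psmult_def ind_def by (intro sum.neutral) auto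

lemma span_iff: "S \<subseteq> diagrams n \<Longrightarrow> f \<in> span_of n S \<longleftrightarrow> (\<forall>d. d \<notin> S \<longrightarrow> f d = 0)"
  unfolding span_of_def PA_def by blast

lemma PA_span: "PA n = span_of n (diagrams n)"
  unfolding span_of_def PA_def by blast

lemma smult_ind_span: "S \<subseteq> diagrams n \<Longrightarrow> e \<in> S \<Longrightarrow> psmult r (ind e) \<in> span_of n S"
  by (subst span_iff) (auto simp: psmult_def ind_def)

lemma span_mono: "S \<subseteq> S' \<Longrightarrow> span_of n S \<subseteq> span_of n S'"
  unfolding span_of_def by blast

lemma span_submodule:
  fixes \<delta> :: "'r::comm_ring_1"
  assumes S: "S \<subseteq> diagrams n"
    and cl: "\<And>d1 d2. d1 \<in> diagrams n \<Longrightarrow> d2 \<in> S \<Longrightarrow> compose n d1 d2 \<in> S"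
  shows "left_submodule n \<delta> (span_of n S)"
proof -
  have pm: "pmult n \<delta> a u \<in> span_of n S" if u: "u \<in> span_of n S" for a u :: "int set set \<Rightarrow> 'r"
  proof -
    have "pmult n \<delta> a u d = 0" if dS: "d \<notin> S" for d
      unfolding pmult_def
    proof (intro sum.neutral ballI)
      fix e1 e2 assume e: "e1 \<in> diagrams n" "e2 \<in> diagrams n"
      show "(if compose n e1 e2 = d then a e1 * u e2 * \<delta> ^ middle_count n e1 e2 else 0) = 0"
      proof (cases "e2 \<in> S")
        case True then show ?thesis using cl[OF e(1) True] dS by auto
      next
        case False then have "u e2 = 0" using u S span_iff by blast
        then show ?thesis by simp
      qed
    qed
    then show ?thesis using S span_iff by blast
  qed
  show ?thesis unfolding left_submodule_def
  proof (intro conjI ballI allI)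
    show "span_of n S \<subseteq> (PA n :: (int set set \<Rightarrow> 'r) set)" unfolding span_of_def by blast
    show "(0 :: int set set \<Rightarrow> 'r) \<in> span_of n S" by (simp add: span_iff[OF S])
  next
    fix u v :: "int set set \<Rightarrow> 'r" assume "u \<in> span_of n S" "v \<in> span_of n S"
    then show "u + v \<in> span_of n S" by (simp add: span_iff[OF S])
  next
    fix r :: 'r and u :: "int set set \<Rightarrow> 'r" assume "u \<in> span_of n S"
    then show "psmult r u \<in> span_of n S" by (simp add: span_iff[OF S] psmult_def)
  next
    fix a u :: "int set set \<Rightarrow> 'r" assume "u \<in> span_of n S"
    then show "pmult n \<delta> a u \<in> span_of n S" by (rule pm)
  qed
qed

definition subgrp :: "'m::ab_group_add set \<Rightarrow> bool" where
  "subgrp S \<longleftrightarrow> 0 \<in> S \<and> (\<forall>u\<in>S. \<forall>v\<in>S. u - v \<in> S)"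

lemma subgrp_0: "subgrp S \<Longrightarrow> 0 \<in> S" unfolding subgrp_def by blast
lemma subgrp_diff: "subgrp S \<Longrightarrow> u \<in> S \<Longrightarrow> v \<in> S \<Longrightarrow> u - v \<in> S" unfolding subgrp_def by blast
lemma subgrp_neg: "subgrp S \<Longrightarrow> v \<in> S \<Longrightarrow> - v \<in> S"
  by (metis subgrp_diff subgrp_0 diff_0)
lemma subgrp_add: "subgrp S \<Longrightarrow> u \<in> S \<Longrightarrow> v \<in> S \<Longrightarrow> u + v \<in> S"
  using subgrp_diff[of S u "- v"] subgrp_neg[of S v] by simp

lemma subgrpI: "0 \<in> S \<Longrightarrow> (\<And>u v. u \<in> S \<Longrightarrow> v \<in> S \<Longrightarrow> u + v \<in> S) \<Longrightarrow> (\<And>v. v \<in> S \<Longrightarrow> - v \<in> S) \<Longrightarrow> subgrp S"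
  unfolding subgrp_def by (metis diff_conv_add_uminus)

lemma subgrp_span:
  assumes S: "S \<subseteq> diagrams n" shows "subgrp (span_of n S :: (int set set \<Rightarrow> 'r::comm_ring_1) set)"
  unfolding subgrp_def
proof (intro conjI ballI)
  show "(0 :: int set set \<Rightarrow> 'r) \<in> span_of n S" by (simp add: span_iff[OF S])
  fix u v :: "int set set \<Rightarrow> 'r" assume "u \<in> span_of n S" "v \<in> span_of n S"
  then show "u - v \<in> span_of n S" by (simp add: span_iff[OF S])
qed

lemma subgrp_Times: "subgrp S1 \<Longrightarrow> subgrp S2 \<Longrightarrow> subgrp (S1 \<times> S2)"
  unfolding subgrp_def by (auto simp: zero_prod_def)

lemma subgrp_Int: "subgrp S1 \<Longrightarrow> subgrp S2 \<Longrightarrow> subgrp (S1 \<inter> S2)"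
  unfolding subgrp_def by auto

lemma setsum_mem: "z \<in> setsum N K \<longleftrightarrow> (\<exists>u\<in>N. \<exists>v\<in>K. z = u + v)"
  unfolding setsum_def by blast

lemma subgrp_setsum:
  assumes s1: "subgrp S1" and s2: "subgrp S2" shows "subgrp (setsum S1 S2)"
proof (rule subgrpI)
  have "(0::'a) = 0 + 0" by simp
  then show "0 \<in> setsum S1 S2" unfolding setsum_mem using subgrp_0[OF s1] subgrp_0[OF s2] by blast
next
  fix u v assume "u \<in> setsum S1 S2" "v \<in> setsum S1 S2"
  then obtain u1 u2 v1 v2 where uv: "u = u1 + u2" "v = v1 + v2" "u1 \<in> S1" "v1 \<in> S1" "u2 \<in> S2" "v2 \<in> S2"
    unfolding setsum_mem by blast
  have "u + v = (u1 + v1) + (u2 + v2)" using uv(1,2) by (simp add: algebra_simps)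
  moreover have "u1 + v1 \<in> S1" using subgrp_add[OF s1 uv(3,4)] .
  moreover have "u2 + v2 \<in> S2" using subgrp_add[OF s2 uv(5,6)] .
  ultimately show "u + v \<in> setsum S1 S2" unfolding setsum_mem by blast
next
  fix v assume "v \<in> setsum S1 S2"
  then obtain v1 v2 where vv: "v = v1 + v2" "v1 \<in> S1" "v2 \<in> S2"
    unfolding setsum_mem by blast
  have "- v = (- v1) + (- v2)" using vv(1) by simp
  moreover have "- v1 \<in> S1" using subgrp_neg[OF s1 vv(2)] .
  moreover have "- v2 \<in> S2" using subgrp_neg[OF s2 vv(3)] .
  ultimately show "- v \<in> setsum S1 S2" unfolding setsum_mem by blast
qed

lemma setsum_sub1:
  assumes "subgrp S2" shows "S1 \<subseteq> setsum S1 S2"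
proof
  fix z assume "z \<in> S1"
  moreover have "z = z + 0" by simp
  ultimately show "z \<in> setsum S1 S2" unfolding setsum_mem using subgrp_0[OF assms] by blast
qed

lemma setsum_sub2:
  assumes "subgrp S1" shows "S2 \<subseteq> setsum S1 S2"
proof
  fix z assume "z \<in> S2"
  moreover have "z = 0 + z" by simp
  ultimately show "z \<in> setsum S1 S2" unfolding setsum_mem using subgrp_0[OF assms] by blast
qed

lemma coset_mem: "z \<in> coset S m \<longleftrightarrow> (\<exists>k\<in>S. z = m + k)"
  unfolding coset_def by blast

lemma coset_self:
  assumes s: "subgrp S" and m: "m \<in> S" shows "coset S m = S"
proof (intro equalityI subsetI)
  fix z assume "z \<in> coset S m"
  then obtain k where "k \<in> S" "z = m + k" unfolding coset_mem by blast
  then show "z \<in> S" using subgrp_add[OF s m] by simp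
next
  fix z assume z: "z \<in> S"
  then have "z - m \<in> S" using subgrp_diff[OF s z m] by simp
  moreover have "z = m + (z - m)" by simp
  ultimately show "z \<in> coset S m" unfolding coset_mem by blast
qed

lemma coset_eqI:
  assumes s: "subgrp S" and uv: "u - v \<in> S" shows "coset S u = coset S v"
proof (intro equalityI subsetI)
  fix z assume "z \<in> coset S u"
  then obtain k where k: "k \<in> S" "z = u + k" unfolding coset_mem by blast
  have "(u - v) + k \<in> S" using subgrp_add[OF s uv k(1)] .
  moreover have "z = v + ((u - v) + k)" using k(2) by simp
  ultimately show "z \<in> coset S v" unfolding coset_mem by blast
next
  fix z assume "z \<in> coset S v"
  then obtain k where k: "k \<in> S" "z = v + k" unfolding coset_mem by blast
  have "k - (u - v) \<in> S" using subgrp_diff[OF s k(1) uv] .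
  moreover have "z = u + (k - (u - v))" using k(2) by simp
  ultimately show "z \<in> coset S u" unfolding coset_mem by blast
qed

lemma coset_in: "subgrp S \<Longrightarrow> u \<in> coset S u"
  unfolding coset_mem using subgrp_0 by (metis add.right_neutral)

lemma coset_eqD:
  assumes s: "subgrp S" and e: "coset S u = coset S v" shows "u - v \<in> S"
proof -
  have "u \<in> coset S v" using e coset_in[OF s, of u] by simp
  then obtain k where "k \<in> S" "u = v + k" unfolding coset_mem by blast
  then show ?thesis by simp
qed

lemma some_coset:
  assumes s: "subgrp S" shows "(SOME m. m \<in> coset S u) - u \<in> S"
proof -
  have "(SOME m. m \<in> coset S u) \<in> coset S u" using coset_in[OF s] by (rule someI)
  then obtain k where "k \<in> S" "(SOME m. m \<in> coset S u) = u + k" unfolding coset_mem by blast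
  then show ?thesis by simp
qed

lemma triv_rel_0: "0 \<in> triv_rel n sm act M"
  unfolding triv_rel_def by (rule CollectI, rule exI[of _ 0]) simp

lemma triv_rel_snoc:
  assumes "u \<in> triv_rel n sm act M" "\<alpha> \<in> PA n" "\<mu> \<in> M"
  shows "u + (sm (eps n \<alpha>) \<mu> - act \<alpha> \<mu>) \<in> triv_rel n sm act M"
proof -
  have "\<exists>(k::nat) a m. u = (\<Sum>i<k. sm (eps n (a i)) (m i) - act (a i) (m i)) \<and> (\<forall>i<k. a i \<in> PA n \<and> m i \<in> M)"
    using assms(1) unfolding triv_rel_def by simp
  then obtain k :: nat and a m where u: "u = (\<Sum>i<k. sm (eps n (a i)) (m i) - act (a i) (m i))"
    and am: "\<forall>i<k. a i \<in> PA n \<and> m i \<in> M" by blast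
  let ?a = "a(k := \<alpha>)" and ?m = "m(k := \<mu>)"
  have "(\<Sum>i<Suc k. sm (eps n (?a i)) (?m i) - act (?a i) (?m i))
      = (\<Sum>i<k. sm (eps n (?a i)) (?m i) - act (?a i) (?m i)) + (sm (eps n \<alpha>) \<mu> - act \<alpha> \<mu>)"
    by simp
  also have "(\<Sum>i<k. sm (eps n (?a i)) (?m i) - act (?a i) (?m i)) = u"
    unfolding u by (intro sum.cong) auto
  finally have eq: "u + (sm (eps n \<alpha>) \<mu> - act \<alpha> \<mu>) = (\<Sum>i<Suc k. sm (eps n (?a i)) (?m i) - act (?a i) (?m i))" by simp
  have "\<forall>i<Suc k. ?a i \<in> PA n \<and> ?m i \<in> M" using am assms(2,3) by (auto simp: less_Suc_eq)
  then show ?thesis unfolding eq triv_rel_def by blast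
qed

lemma triv_rel_add:
  assumes "u \<in> triv_rel n sm act M" "v \<in> triv_rel n sm act M"
  shows "u + v \<in> triv_rel n sm act M"
proof -
  have "\<exists>(k::nat) a m. v = (\<Sum>i<k. sm (eps n (a i)) (m i) - act (a i) (m i)) \<and> (\<forall>i<k. a i \<in> PA n \<and> m i \<in> M)"
    using assms(2) unfolding triv_rel_def by simp
  then obtain k :: nat and a m where v: "v = (\<Sum>i<k. sm (eps n (a i)) (m i) - act (a i) (m i))"
    and am: "\<forall>i<k. a i \<in> PA n \<and> m i \<in> M" by blast
  have "u + (\<Sum>i<j. sm (eps n (a i)) (m i) - act (a i) (m i)) \<in> triv_rel n sm act M" if "j \<le> k" for j
    using that
  proof (induction j)
    case 0 then show ?case using assms(1) by simp
  next
    case (Suc j)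
    then have "u + (\<Sum>i<j. sm (eps n (a i)) (m i) - act (a i) (m i)) + (sm (eps n (a j)) (m j) - act (a j) (m j))
       \<in> triv_rel n sm act M" using am by (intro triv_rel_snoc) auto
    then show ?case by (simp add: add.assoc)
  qed
  then show ?thesis using v by simp
qed

lemma triv_rel_sum:
  assumes "finite S" "\<And>d. d \<in> S \<Longrightarrow> t d \<in> triv_rel n sm act M"
  shows "(\<Sum>d\<in>S. t d) \<in> triv_rel n sm act M"
  using assms by (induction S rule: finite_induct) (auto intro: triv_rel_0 triv_rel_add)

lemma triv_rel_single:
  assumes "\<alpha> \<in> PA n" "\<mu> \<in> M"
  shows "sm (eps n \<alpha>) \<mu> - act \<alpha> \<mu> \<in> triv_rel n sm act M"
  using triv_rel_snoc[OF triv_rel_0 assms] by simp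




lemma psmult_zero: "psmult r 0 = 0"
  unfolding psmult_def by (rule ext) simp

lemma PA_smult: "a \<in> PA n \<Longrightarrow> psmult r a \<in> PA n"
  unfolding PA_def psmult_def by simp

lemma ind_PA: "e \<in> diagrams n \<Longrightarrow> psmult r (ind e) \<in> PA n"
  unfolding PA_span by (rule smult_ind_span) auto

lemma rel_ind:
  fixes \<delta> :: "'r::comm_ring_1"
  assumes d: "d \<in> diagrams n" and e: "e \<in> diagrams n"
    and de: "compose n d e = d" "middle_count n d e = 0"
    and ee: "compose n e e = e" "middle_count n e e = 0"
    and np: "\<not> perm_diagram n e"
    and eM: "\<And>r. psmult r (ind e) \<in> M"
  shows "psmult c (ind d) \<in> triv_rel n psmult (pmult n \<delta>) M"
proof -
  define a0 :: "int set set \<Rightarrow> 'r" where "a0 = psmult (- c) (ind d)"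
  define m0 :: "int set set \<Rightarrow> 'r" where "m0 = psmult 1 (ind e)"
  define a1 :: "int set set \<Rightarrow> 'r" where "a1 = psmult 1 (ind e)"
  define m1 :: "int set set \<Rightarrow> 'r" where "m1 = psmult (eps n a0) (ind e)"
  have t0: "psmult (eps n a0) m0 - pmult n \<delta> a0 m0 \<in> triv_rel n psmult (pmult n \<delta>) M"
    by (rule triv_rel_single) (auto simp: a0_def m0_def ind_PA d eM)
  have t1: "psmult (eps n a1) m1 - pmult n \<delta> a1 m1 \<in> triv_rel n psmult (pmult n \<delta>) M"
    by (rule triv_rel_single) (auto simp: a1_def m1_def ind_PA e eM)
  have p0: "pmult n \<delta> a0 m0 = psmult (- c) (ind d)"
    unfolding a0_def m0_def pmult_ind[OF d e] de by simp
  have p1: "pmult n \<delta> a1 m1 = psmult (eps n a0) (ind e)"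
    unfolding a1_def m1_def pmult_ind[OF e e] ee by simp
  have e1: "eps n a1 = 0" unfolding a1_def using eps_ind_nonperm[OF np] .
  have "(psmult (eps n a0) m0 - pmult n \<delta> a0 m0) + (psmult (eps n a1) m1 - pmult n \<delta> a1 m1)
      = psmult c (ind d)"
    unfolding p0 p1 e1 by (rule ext) (simp add: psmult_def m0_def m1_def)
  then show ?thesis using triv_rel_add[OF t0 t1] by simp
qed

lemma sum_apply_fun: "finite S \<Longrightarrow> (\<Sum>d\<in>S. F d) e = (\<Sum>d\<in>S. F d e)"
  by (induction S rule: finite_induct) auto

lemma span_decomp:
  assumes S: "S \<subseteq> diagrams n" and f: "f \<in> span_of n S"
  shows "f = (\<Sum>d\<in>S. psmult (f d) (ind d))"
proof
  fix e
  have fin: "finite S" using finite_subset[OF S finite_diagrams] .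
  have "(\<Sum>d\<in>S. psmult (f d) (ind d)) e = (\<Sum>d\<in>S. if e = d then f d else 0)"
    unfolding sum_apply_fun[OF fin] psmult_def ind_def by (intro sum.cong) auto
  also have "\<dots> = f e" using fin f span_iff[OF S] by auto
  finally show "f e = (\<Sum>d\<in>S. psmult (f d) (ind d)) e" by simp
qed

lemma span_rel:
  fixes \<delta> :: "'r::comm_ring_1"
  assumes S: "S \<subseteq> diagrams n" and f: "f \<in> span_of n S"
    and each: "\<And>d c. d \<in> S \<Longrightarrow> psmult c (ind d) \<in> triv_rel n psmult (pmult n \<delta>) M"
  shows "f \<in> triv_rel n psmult (pmult n \<delta>) M"
proof -
  have fin: "finite S" using finite_subset[OF S finite_diagrams] .
  have "(\<Sum>d\<in>S. psmult (f d) (ind d)) \<in> triv_rel n psmult (pmult n \<delta>) M"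
    using fin each by (intro triv_rel_sum) auto
  then show ?thesis using span_decomp[OF S f] by simp
qed

lemma sum_pair1: "(\<Sum>i<(k::nat). (t i, 0)) = ((\<Sum>i<k. t i), (0::'b::comm_monoid_add))"
  by (induction k) (auto simp: zero_prod_def)

lemma sum_pair2: "(\<Sum>i<(k::nat). (0, t i)) = ((0::'b::comm_monoid_add), (\<Sum>i<k. t i))"
  by (induction k) (auto simp: zero_prod_def)

lemma triv_rel_intro:
  "(\<forall>i<k. a i \<in> PA n \<and> m i \<in> M) \<Longrightarrow> (\<Sum>i<(k::nat). sm (eps n (a i)) (m i) - act (a i) (m i)) \<in> triv_rel n sm act M"
  unfolding triv_rel_def by blast

lemma rel_pair1:
  fixes \<delta> :: "'r::comm_ring_1"
  assumes u: "u \<in> triv_rel n psmult (pmult n \<delta>) A" and B: "0 \<in> B"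
  shows "(u, 0) \<in> triv_rel n sm2 (act2 n \<delta>) (A \<times> B)"
proof -
  have "\<exists>(k::nat) a m. u = (\<Sum>i<k. psmult (eps n (a i)) (m i) - pmult n \<delta> (a i) (m i)) \<and> (\<forall>i<k. a i \<in> PA n \<and> m i \<in> A)"
    using u unfolding triv_rel_def by simp
  then obtain k :: nat and a m where um: "u = (\<Sum>i<k. psmult (eps n (a i)) (m i) - pmult n \<delta> (a i) (m i))"
    and am: "\<forall>i<k. a i \<in> PA n \<and> m i \<in> A" by blast
  have "(u, 0) = (\<Sum>i<k. (psmult (eps n (a i)) (m i) - pmult n \<delta> (a i) (m i), 0))"
    unfolding um sum_pair1 ..
  also have "\<dots> = (\<Sum>i<k. sm2 (eps n (a i)) (m i, 0) - act2 n \<delta> (a i) (m i, 0))"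
    by (simp add: sm2_def act2_def psmult_zero pmult_zero)
  finally have eq: "(u, 0) = (\<Sum>i<k. sm2 (eps n (a i)) (m i, 0) - act2 n \<delta> (a i) (m i, 0))" .
  have "\<forall>i<k. a i \<in> PA n \<and> (m i, 0) \<in> A \<times> B" using am B by auto
  then show ?thesis unfolding eq using triv_rel_intro[where m="\<lambda>i. (m i, 0)" and k=k and a=a and n=n and M="A \<times> B" and sm=sm2 and act="act2 n \<delta>"] by simp
qed

lemma rel_pair2:
  fixes \<delta> :: "'r::comm_ring_1"
  assumes u: "u \<in> triv_rel n psmult (pmult n \<delta>) B" and A: "0 \<in> A"
  shows "(0, u) \<in> triv_rel n sm2 (act2 n \<delta>) (A \<times> B)"
proof -
  have "\<exists>(k::nat) a m. u = (\<Sum>i<k. psmult (eps n (a i)) (m i) - pmult n \<delta> (a i) (m i)) \<and> (\<forall>i<k. a i \<in> PA n \<and> m i \<in> B)"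
    using u unfolding triv_rel_def by simp
  then obtain k :: nat and a m where um: "u = (\<Sum>i<k. psmult (eps n (a i)) (m i) - pmult n \<delta> (a i) (m i))"
    and am: "\<forall>i<k. a i \<in> PA n \<and> m i \<in> B" by blast
  have "(0, u) = (\<Sum>i<k. (0, psmult (eps n (a i)) (m i) - pmult n \<delta> (a i) (m i)))"
    unfolding um sum_pair2 ..
  also have "\<dots> = (\<Sum>i<k. sm2 (eps n (a i)) (0, m i) - act2 n \<delta> (a i) (0, m i))"
    by (simp add: sm2_def act2_def psmult_zero pmult_zero)
  finally have eq: "(0, u) = (\<Sum>i<k. sm2 (eps n (a i)) (0, m i) - act2 n \<delta> (a i) (0, m i))" .
  have "\<forall>i<k. a i \<in> PA n \<and> (0, m i) \<in> A \<times> B" using am A by auto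
  then show ?thesis unfolding eq using triv_rel_intro[where m="\<lambda>i. (0, m i)" and k=k and a=a and n=n and M="A \<times> B" and sm=sm2 and act="act2 n \<delta>"] by simp
qed

lemma triv_rel_neg:
  fixes \<delta> :: "'r::comm_ring_1"
  assumes u: "u \<in> triv_rel n psmult (pmult n \<delta>) M"
  shows "- u \<in> triv_rel n psmult (pmult n \<delta>) M"
proof -
  have "\<exists>(k::nat) a m. u = (\<Sum>i<k. psmult (eps n (a i)) (m i) - pmult n \<delta> (a i) (m i)) \<and> (\<forall>i<k. a i \<in> PA n \<and> m i \<in> M)"
    using u unfolding triv_rel_def by simp
  then obtain k :: nat and a m where um: "u = (\<Sum>i<k. psmult (eps n (a i)) (m i) - pmult n \<delta> (a i) (m i))"
    and am: "\<forall>i<k. a i \<in> PA n \<and> m i \<in> M" by blast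
  define a' where "a' = (\<lambda>i. psmult (-1) (a i))"
  have "- u = (\<Sum>i<k. - (psmult (eps n (a i)) (m i) - pmult n \<delta> (a i) (m i)))"
    unfolding um by (rule sum_negf[symmetric])
  also have "\<dots> = (\<Sum>i<k. psmult (eps n (a' i)) (m i) - pmult n \<delta> (a' i) (m i))"
    unfolding a'_def eps_smult pmult_smult_left
    by (intro sum.cong refl ext) (simp add: psmult_def)
  finally have eq: "- u = (\<Sum>i<k. psmult (eps n (a' i)) (m i) - pmult n \<delta> (a' i) (m i))" .
  have "\<forall>i<k. a' i \<in> PA n \<and> m i \<in> M" using am by (simp add: a'_def PA_smult)
  then show ?thesis unfolding eq by (rule triv_rel_intro)
qed

lemma triv_rel_sub:
  assumes M: "subgrp M"
    and t: "\<And>\<alpha> \<mu>. \<alpha> \<in> PA n \<Longrightarrow> \<mu> \<in> M \<Longrightarrow> sm (eps n \<alpha>) \<mu> - act \<alpha> \<mu> \<in> M"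
  shows "triv_rel n sm act M \<subseteq> M"
proof
  fix u assume u: "u \<in> triv_rel n sm act M"
  have "\<exists>(k::nat) a m. u = (\<Sum>i<k. sm (eps n (a i)) (m i) - act (a i) (m i)) \<and> (\<forall>i<k. a i \<in> PA n \<and> m i \<in> M)"
    using u unfolding triv_rel_def by simp
  then obtain k :: nat and a m where um: "u = (\<Sum>i<k. sm (eps n (a i)) (m i) - act (a i) (m i))"
    and am: "\<forall>i<k. a i \<in> PA n \<and> m i \<in> M" by blast
  have "(\<Sum>i<j. sm (eps n (a i)) (m i) - act (a i) (m i)) \<in> M" if "j \<le> k" for j
    using that
  proof (induction j)
    case 0 then show ?case using subgrp_0[OF M] by simp
  next
    case (Suc j)
    then have "sm (eps n (a j)) (m j) - act (a j) (m j) \<in> M" using am t by simp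
    then show ?case using Suc subgrp_add[OF M] by simp
  qed
  then show "u \<in> M" using um by simp
qed




lemma induced_id:
  assumes "subgrp N" "subgrp N2" "N \<subseteq> N2"
  shows "induced id N2 (coset N f) = coset N2 f"
  unfolding induced_def id_def using some_coset[OF assms(1), of f] assms(3)
  by (intro coset_eqI[OF assms(2)]) blast

lemma quot_mem: "C \<in> quot M N \<longleftrightarrow> (\<exists>m\<in>M. C = coset N m)"
  unfolding quot_def by blast

lemma eA_nonperm: "x > 0 \<Longrightarrow> \<not> perm_diagram n (eA n x y)"
proof
  assume x: "x > 0" and p: "perm_diagram n (eA n x y)"
  have "{x} \<in> eA n x y" unfolding eA_def by simp
  then obtain i j where "1 \<le> i" "{x} = {- i, j}" using p unfolding perm_diagram_def by blast
  then have "- i = x" by (metis insertI1 singletonD)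
  then show False using x `1 \<le> i` by simp
qed

lemma eB_nonperm: "x > 0 \<Longrightarrow> \<not> perm_diagram n (eB n x y)"
proof
  assume x: "x > 0" and p: "perm_diagram n (eB n x y)"
  have "{-x} \<in> eB n x y" unfolding eB_def by simp
  then obtain i j where "1 \<le> j" "{-x} = {- i, j}" using p unfolding perm_diagram_def by blast
  then have "j = - x" by (metis insertI1 insert_commute singletonD)
  then show False using x `1 \<le> j` by simp
qed

lemma SA_rel:
  fixes \<delta> :: "'r::comm_ring_1"
  assumes d: "d \<in> diagrams n" "{x} \<in> d"
    and xy: "1 \<le> x" "x \<le> int n" "1 \<le> y" "y \<le> int n" "x \<noteq> y"
    and eM: "\<And>r. psmult r (ind (eA n x y)) \<in> M"
  shows "psmult c (ind d) \<in> triv_rel n psmult (pmult n \<delta>) M"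
proof -
  have e: "eA n x y \<in> diagrams n" using eA_diagram[OF xy] .
  have ex: "{x} \<in> eA n x y" unfolding eA_def by simp
  show ?thesis
    using rel_ind[OF d(1) e _ _ _ _ eA_nonperm eM] comp_eA[OF d xy] comp_eA[OF e ex xy] xy by simp
qed

lemma SB_rel:
  fixes \<delta> :: "'r::comm_ring_1"
  assumes d: "d \<in> diagrams n" "B0 \<in> d" "x \<in> B0" "y \<in> B0"
    and xy: "1 \<le> x" "x \<le> int n" "1 \<le> y" "y \<le> int n" "x \<noteq> y"
    and eM: "\<And>r. psmult r (ind (eB n x y)) \<in> M"
  shows "psmult c (ind d) \<in> triv_rel n psmult (pmult n \<delta>) M"
proof -
  have e: "eB n x y \<in> diagrams n" using eB_diagram[OF xy] .
  have ex: "{-y,y,x} \<in> eB n x y" unfolding eB_def by simp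
  show ?thesis
    using rel_ind[OF d(1) e _ _ _ _ eB_nonperm eM] comp_eB[OF d xy] comp_eB[OF e ex _ _ xy] xy by simp
qed

lemma clos_SA:
  assumes "x > 0" "d1 \<in> diagrams n" "d2 \<in> {d \<in> diagrams n. {x} \<in> d}"
  shows "compose n d1 d2 \<in> {d \<in> diagrams n. {x} \<in> d}"
  using assms compose_diagram compose_singleton by blast

lemma clos_SB:
  assumes X: "\<And>z. z \<in> X \<Longrightarrow> z > 0" and x: "x > 0" and d1: "d1 \<in> diagrams n"
    and d2: "d2 \<in> {d \<in> diagrams n. \<exists>y\<in>X. y \<noteq> x \<and> (\<exists>Bl\<in>d. x \<in> Bl \<and> y \<in> Bl)}"
  shows "compose n d1 d2 \<in> {d \<in> diagrams n. \<exists>y\<in>X. y \<noteq> x \<and> (\<exists>Bl\<in>d. x \<in> Bl \<and> y \<in> Bl)}"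
proof -
  obtain y Bl where y: "y \<in> X" "y \<noteq> x" "Bl \<in> d2" "x \<in> Bl" "y \<in> Bl" "d2 \<in> diagrams n" using d2 by blast
  have "\<exists>Bl\<in>compose n d1 d2. x \<in> Bl \<and> y \<in> Bl"
    using compose_pair[OF d1 y(6) y(3) y(4) y(5) x X[OF y(1)]] .
  then show ?thesis using compose_diagram[OF d1 y(6)] y(1,2) by blast
qed

lemma clos_J:
  assumes Z: "\<And>z. z \<in> Z \<Longrightarrow> z > 0" and d1: "d1 \<in> diagrams n" and d2: "d2 \<in> Jdiags n Z"
  shows "compose n d1 d2 \<in> Jdiags n Z"
proof -
  have d2d: "d2 \<in> diagrams n" using d2 unfolding Jdiags_def by blast
  have cd: "compose n d1 d2 \<in> diagrams n" using compose_diagram[OF d1 d2d] .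
  from d2 consider z where "z \<in> Z" "{z} \<in> d2"
    | z1 z2 Bl where "z1 \<in> Z" "z2 \<in> Z" "z1 \<noteq> z2" "Bl \<in> d2" "z1 \<in> Bl" "z2 \<in> Bl"
    unfolding Jdiags_def by blast
  then show ?thesis
  proof cases
    case 1
    then have "{z} \<in> compose n d1 d2" using compose_singleton[OF d1 d2d] Z by blast
    then show ?thesis using cd 1 unfolding Jdiags_def by blast
  next
    case 2
    then have "\<exists>Bl\<in>compose n d1 d2. z1 \<in> Bl \<and> z2 \<in> Bl" using compose_pair[OF d1 d2d] Z by blast
    then show ?thesis using cd 2 unfolding Jdiags_def by blast
  qed
qed

theorem proposition4p6:
  fixes n :: nat and \<delta> :: "'r::comm_ring_1" and X :: "int set" and x :: int
  assumes "n \<ge> 2" and "X \<subseteq> {1 .. int n}" and "x \<in> X"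
  defines "P \<equiv> (PA n :: (int set set \<Rightarrow> 'r) set)"
      and "J' \<equiv> (Jid n (X - {x}) :: (int set set \<Rightarrow> 'r) set)"
      and "JX \<equiv> (Jid n X :: (int set set \<Rightarrow> 'r) set)"
      and "A \<equiv> (Amod n x :: (int set set \<Rightarrow> 'r) set)"
      and "B \<equiv> (Bmod n X x :: (int set set \<Rightarrow> 'r) set)"
  defines "M1 \<equiv> A \<times> B" and "N1 \<equiv> (A \<inter> J') \<times> (B \<inter> J')"
      and "g \<equiv> (\<lambda>p. fst p + snd p)"
  shows
    "left_submodule n \<delta> A \<and> left_submodule n \<delta> B \<and> left_submodule n \<delta> J' \<and> left_submodule n \<delta> JX \<and>
    inj_on (induced g J') (quot M1 N1) \<and>
    induced g J' ` quot M1 N1 = {C \<in> quot P J'. induced id JX C = JX} \<and>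
    induced id JX ` quot P J' = quot P JX \<and>
    inj_on (induced g (triv_tensor n sm1 (pmult n \<delta>) P J'))
            (quot M1 (triv_tensor n sm2 (act2 n \<delta>) M1 N1)) \<and>
    induced g (triv_tensor n sm1 (pmult n \<delta>) P J') ` quot M1 (triv_tensor n sm2 (act2 n \<delta>) M1 N1)
       = {C \<in> quot P (triv_tensor n sm1 (pmult n \<delta>) P J').
            induced id (triv_tensor n sm1 (pmult n \<delta>) P JX) C = triv_tensor n sm1 (pmult n \<delta>) P JX} \<and>
    induced id (triv_tensor n sm1 (pmult n \<delta>) P JX) ` quot P (triv_tensor n sm1 (pmult n \<delta>) P J')
       = quot P (triv_tensor n sm1 (pmult n \<delta>) P JX)"
proof -
  have x: "1 \<le> x" "x \<le> int n" using assms(2,3) by auto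
  have xp: "x > 0" using x by simp
  have Xb: "\<And>z. z \<in> X \<Longrightarrow> 1 \<le> z \<and> z \<le> int n" using assms(2) by auto
  have Xp: "\<And>z. z \<in> X \<Longrightarrow> z > 0" using Xb by force
  have Xp': "\<And>z. z \<in> X - {x} \<Longrightarrow> z > 0" using Xp by blast
  define y0 where "y0 = (if x = 1 then 2 else (1::int))"
  have y0: "1 \<le> y0" "y0 \<le> int n" "x \<noteq> y0" using assms(1) x unfolding y0_def by auto
  define SA where "SA = {d \<in> diagrams n. {x} \<in> d}"
  define SB where "SB = {d \<in> diagrams n. \<exists>y\<in>X. y \<noteq> x \<and> (\<exists>Bl\<in>d. x \<in> Bl \<and> y \<in> Bl)}"
  define SJ' where "SJ' = Jdiags n (X - {x})"
  define SJX where "SJX = Jdiags n X"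
  have SAd: "SA \<subseteq> diagrams n" unfolding SA_def by blast
  have SBd: "SB \<subseteq> diagrams n" unfolding SB_def by blast
  have SJ'd: "SJ' \<subseteq> diagrams n" unfolding SJ'_def Jdiags_def by blast
  have SJXd: "SJX \<subseteq> diagrams n" unfolding SJX_def Jdiags_def by blast
  have A_eq: "A = span_of n SA" unfolding A_def Amod_def SA_def ..
  have B_eq: "B = span_of n SB" unfolding B_def Bmod_def SB_def ..
  have J'_eq: "J' = span_of n SJ'" unfolding J'_def Jid_def SJ'_def ..
  have JX_eq: "JX = span_of n SJX" unfolding JX_def Jid_def SJX_def ..
  have P_eq: "P = span_of n (diagrams n)" unfolding P_def by (rule PA_span)
  have K1: "SA \<inter> SB = {}"
  proof (rule ccontr)
    assume "SA \<inter> SB \<noteq> {}"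
    then obtain d y Bl where d: "d \<in> diagrams n" "{x} \<in> d" "y \<noteq> x" "Bl \<in> d" "x \<in> Bl" "y \<in> Bl"
      unfolding SA_def SB_def by blast
    have "Bl = {x}" using diag_disj[OF d(1) d(4) d(2) d(5)] by simp
    then show False using d(3,6) by simp
  qed
  have K2: "SJX \<subseteq> SA \<union> SB \<union> SJ'"
  proof
    fix d assume "d \<in> SJX"
    then have d: "d \<in> diagrams n" and "(\<exists>z\<in>X. {z} \<in> d) \<or>
      (\<exists>z1\<in>X. \<exists>z2\<in>X. z1 \<noteq> z2 \<and> (\<exists>Bl\<in>d. z1 \<in> Bl \<and> z2 \<in> Bl))"
      unfolding SJX_def Jdiags_def by blast+
    then consider z where "z \<in> X" "{z} \<in> d"
      | z1 z2 Bl where "z1 \<in> X" "z2 \<in> X" "z1 \<noteq> z2" "Bl \<in> d" "z1 \<in> Bl" "z2 \<in> Bl" by blast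
    then show "d \<in> SA \<union> SB \<union> SJ'"
    proof cases
      case 1
      then show ?thesis using d unfolding SA_def SJ'_def Jdiags_def by (cases "z = x") auto
    next
      case 2
      show ?thesis
      proof (cases "z1 = x")
        case True
        have "d \<in> SB" unfolding SB_def using d 2 True by (intro CollectI conjI bexI[of _ z2]) auto
        then show ?thesis by blast
      next
        case F1: False
        show ?thesis
        proof (cases "z2 = x")
          case True
          have "d \<in> SB" unfolding SB_def using d 2 True by (intro CollectI conjI bexI[of _ z1]) auto
          then show ?thesis by blast
        next
          case False then show ?thesis using d 2 F1 unfolding SJ'_def Jdiags_def by blast
        qed
      qed
    qed
  qed
  have K3: "SA \<subseteq> SJX" "SB \<subseteq> SJX" "SJ' \<subseteq> SJX"
    unfolding SA_def SB_def SJ'_def SJX_def Jdiags_def using assms(3) by blast+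
  have sA: "subgrp A" unfolding A_eq by (rule subgrp_span[OF SAd])
  have sB: "subgrp B" unfolding B_eq by (rule subgrp_span[OF SBd])
  have sJ': "subgrp J'" unfolding J'_eq by (rule subgrp_span[OF SJ'd])
  have sJX: "subgrp JX" unfolding JX_eq by (rule subgrp_span[OF SJXd])
  have sP: "subgrp P" unfolding P_eq by (rule subgrp_span) simp
  have AJX: "A \<subseteq> JX" unfolding A_eq JX_eq by (rule span_mono[OF K3(1)])
  have BJX: "B \<subseteq> JX" unfolding B_eq JX_eq by (rule span_mono[OF K3(2)])
  have J'JX: "J' \<subseteq> JX" unfolding J'_eq JX_eq by (rule span_mono[OF K3(3)])
  have JXP: "JX \<subseteq> P" unfolding P_eq JX_eq by (rule span_mono[OF SJXd])
  have sM1: "subgrp M1" unfolding M1_def by (rule subgrp_Times[OF sA sB])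
  have sN1: "subgrp N1" unfolding N1_def by (intro subgrp_Times subgrp_Int sA sB sJ')
  have N1M1: "N1 \<subseteq> M1" unfolding N1_def M1_def by blast
  have gM1: "g m \<in> JX" if "m \<in> M1" for m
    using that AJX BJX subgrp_add[OF sJX] unfolding M1_def g_def by (cases m) auto
  have gN1: "g m \<in> J'" if "m \<in> N1" for m
    using that subgrp_add[OF sJ'] unfolding N1_def g_def by (cases m) auto
  have c1: "left_submodule n \<delta> A" unfolding A_eq SA_def
    by (rule span_submodule[OF SAd[unfolded SA_def]]) (rule clos_SA[OF xp])
  have c2: "left_submodule n \<delta> B" unfolding B_eq SB_def
    by (rule span_submodule[OF SBd[unfolded SB_def]]) (rule clos_SB[OF Xp xp])
  have c3: "left_submodule n \<delta> J'" unfolding J'_eq SJ'_def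
    by (rule span_submodule[OF SJ'd[unfolded SJ'_def]]) (rule clos_J[OF Xp'])
  have c4: "left_submodule n \<delta> JX" unfolding JX_eq SJX_def
    by (rule span_submodule[OF SJXd[unfolded SJX_def]]) (rule clos_J[OF Xp])
  define rA :: "(int set set \<Rightarrow> 'r) \<Rightarrow> (int set set \<Rightarrow> 'r)" where "rA f = (\<lambda>d. if d \<in> SA then f d else 0)" for f
  define rB :: "(int set set \<Rightarrow> 'r) \<Rightarrow> (int set set \<Rightarrow> 'r)" where "rB f = (\<lambda>d. if d \<in> SB then f d else 0)" for f
  have split: "rA f \<in> A \<and> rB f \<in> B \<and> f - rA f - rB f \<in> J'" if f: "f \<in> JX" for f
  proof (intro conjI)
    show "rA f \<in> A" unfolding A_eq span_iff[OF SAd] rA_def by simp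
    show "rB f \<in> B" unfolding B_eq span_iff[OF SBd] rB_def by simp
    have "(f - rA f - rB f) d = 0" if d: "d \<notin> SJ'" for d
    proof (cases "d \<in> SA")
      case True then show ?thesis using K1 by (auto simp: rA_def rB_def)
    next
      case nA: False
      show ?thesis
      proof (cases "d \<in> SB")
        case True then show ?thesis using nA by (auto simp: rA_def rB_def)
      next
        case False
        then have "d \<notin> SJX" using K2 nA d by blast
        then have "f d = 0" using f unfolding JX_eq span_iff[OF SJXd] by blast
        then show ?thesis using nA False by (simp add: rA_def rB_def)
      qed
    qed
    then show "f - rA f - rB f \<in> J'" unfolding J'_eq span_iff[OF SJ'd] by blast
  qed
  have sepAB: "a \<in> J' \<and> b \<in> J'" if ab: "a \<in> A" "b \<in> B" "a + b \<in> J'" for a b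
  proof -
    have a0: "a d = 0" if "d \<notin> SA" for d using ab(1) that unfolding A_eq span_iff[OF SAd] by blast
    have b0: "b d = 0" if "d \<notin> SB" for d using ab(2) that unfolding B_eq span_iff[OF SBd] by blast
    have s0: "a d + b d = 0" if "d \<notin> SJ'" for d using ab(3) that unfolding J'_eq span_iff[OF SJ'd] by simp
    have "a d = 0 \<and> b d = 0" if d: "d \<notin> SJ'" for d
    proof (cases "d \<in> SA")
      case True
      then have "d \<notin> SB" using K1 by blast
      then show ?thesis using b0 s0[OF d] by simp
    next
      case False
      then show ?thesis using a0 s0[OF d] by simp
    qed
    then show ?thesis unfolding J'_eq span_iff[OF SJ'd] by blast
  qed
  have indg: "induced g J' (coset N1 m) = coset J' (g m)" for m
  proof -
    have "(SOME z. z \<in> coset N1 m) - m \<in> N1" by (rule some_coset[OF sN1])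
    then have "g ((SOME z. z \<in> coset N1 m) - m) \<in> J'" by (rule gN1)
    moreover have "g ((SOME z. z \<in> coset N1 m) - m) = g (SOME z. z \<in> coset N1 m) - g m"
      unfolding g_def by simp
    ultimately show ?thesis unfolding induced_def by (intro coset_eqI[OF sJ']) simp
  qed
  have c5: "inj_on (induced g J') (quot M1 N1)"
  proof (rule inj_onI)
    fix C1 C2 assume C1: "C1 \<in> quot M1 N1" and C2: "C2 \<in> quot M1 N1"
      and eq: "induced g J' C1 = induced g J' C2"
    obtain m1 where m1: "m1 \<in> M1" "C1 = coset N1 m1" using C1 unfolding quot_mem by blast
    obtain m2 where m2: "m2 \<in> M1" "C2 = coset N1 m2" using C2 unfolding quot_mem by blast
    have "g m1 - g m2 \<in> J'" using eq unfolding m1(2) m2(2) indg by (rule coset_eqD[OF sJ'])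
    moreover have "g m1 - g m2 = fst (m1 - m2) + snd (m1 - m2)" unfolding g_def by simp
    moreover have "m1 - m2 \<in> M1" using subgrp_diff[OF sM1 m1(1) m2(1)] .
    ultimately have "fst (m1 - m2) \<in> J' \<and> snd (m1 - m2) \<in> J'"
      using sepAB unfolding M1_def by (metis mem_Times_iff)
    moreover have "fst (m1 - m2) \<in> A \<and> snd (m1 - m2) \<in> B"
      using `m1 - m2 \<in> M1` unfolding M1_def by (simp only: mem_Times_iff)
    ultimately have "m1 - m2 \<in> N1" unfolding N1_def by (metis IntI mem_Times_iff)
    then show "C1 = C2" unfolding m1(2) m2(2) by (rule coset_eqI[OF sN1])
  qed
  have indJX: "induced id JX (coset J' f) = coset JX f" for f
    by (rule induced_id[OF sJ' sJX J'JX])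
  have c6: "induced g J' ` quot M1 N1 = {C \<in> quot P J'. induced id JX C = JX}"
  proof (intro equalityI subsetI)
    fix C assume "C \<in> induced g J' ` quot M1 N1"
    then obtain C0 where C0: "C0 \<in> quot M1 N1" "C = induced g J' C0" by blast
    then obtain m where m0: "m \<in> M1" "C0 = coset N1 m" unfolding quot_mem by blast
    then have m: "m \<in> M1" "C = coset J' (g m)" using C0(2) indg by auto
    have gm: "g m \<in> JX" using gM1[OF m(1)] .
    then have "C \<in> quot P J'" using m(2) JXP unfolding quot_mem by blast
    moreover have "induced id JX C = JX" unfolding m(2) indJX using coset_self[OF sJX gm] .
    ultimately show "C \<in> {C \<in> quot P J'. induced id JX C = JX}" by blast
  next
    fix C assume "C \<in> {C \<in> quot P J'. induced id JX C = JX}"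
    then obtain f where f: "f \<in> P" "C = coset J' f" "coset JX f = JX" unfolding quot_mem using indJX by auto
    have "coset JX f = coset JX 0" using f(3) coset_self[OF sJX subgrp_0[OF sJX]] by simp
    then have "f - 0 \<in> JX" by (rule coset_eqD[OF sJX])
    then have fJX: "f \<in> JX" by simp
    define m where "m = (rA f, rB f)"
    have mM: "m \<in> M1" unfolding m_def M1_def using split[OF fJX] by simp
    have gmf: "g m - f = - (f - rA f - rB f)" unfolding m_def g_def by simp
    have "g m - f \<in> J'" unfolding gmf using split[OF fJX] by (intro subgrp_neg[OF sJ']) blast
    then have "induced g J' (coset N1 m) = C" unfolding indg f(2) by (rule coset_eqI[OF sJ'])
    moreover have "coset N1 m \<in> quot M1 N1" using mM unfolding quot_mem by blast
    ultimately show "C \<in> induced g J' ` quot M1 N1" by blast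
  qed
  have c7: "induced id JX ` quot P J' = quot P JX"
    unfolding quot_def image_image indJX ..
  define R1 where "R1 = triv_rel n psmult (pmult n \<delta>) P"
  define T' where "T' = triv_tensor n sm1 (pmult n \<delta>) P J'"
  define TX where "TX = triv_tensor n sm1 (pmult n \<delta>) P JX"
  have T'_eq: "T' = setsum J' R1" unfolding T'_def R1_def triv_tensor_def sm1_def ..
  have TX_eq: "TX = setsum JX R1" unfolding TX_def R1_def triv_tensor_def sm1_def ..
  have sR1: "subgrp R1" unfolding R1_def
    by (rule subgrpI[OF triv_rel_0 triv_rel_add triv_rel_neg])
  have sT': "subgrp T'" unfolding T'_eq by (rule subgrp_setsum[OF sJ' sR1])
  have sTX: "subgrp TX" unfolding TX_eq by (rule subgrp_setsum[OF sJX sR1])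
  have eAd: "eA n x y0 \<in> diagrams n" using eA_diagram[OF x y0] .
  have eASA: "eA n x y0 \<in> SA" unfolding SA_def using eAd by (simp add: eA_def)
  have eBSB: "eB n x y \<in> SB" if "y \<in> X" "y \<noteq> x" for y
  proof -
    have e1: "eB n x y \<in> diagrams n" using eB_diagram[OF x] Xb[OF that(1)] that(2) by auto
    have e0: "{-y,y,x} \<in> eB n x y" unfolding eB_def by simp
    have e2: "\<exists>Bl\<in>eB n x y. x \<in> Bl \<and> y \<in> Bl" by (rule bexI[OF _ e0]) simp
    show ?thesis unfolding SB_def mem_Collect_eq
      by (rule conjI[OF e1], rule bexI[of _ y], rule conjI[OF that(2) e2], rule that(1))
  qed
  have eAP: "psmult r (ind (eA n x y0)) \<in> P" for r
    unfolding P_eq by (rule smult_ind_span[OF subset_refl eAd])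
  have eAA: "psmult r (ind (eA n x y0)) \<in> A" for r
    unfolding A_eq by (rule smult_ind_span[OF SAd eASA])
  have eBP: "psmult r (ind (eB n x y)) \<in> P" if "y \<in> X" "y \<noteq> x" for r y
    unfolding P_eq by (rule smult_ind_span[OF subset_refl]) (use eBSB[OF that] SBd in blast)
  have eBB: "psmult r (ind (eB n x y)) \<in> B" if "y \<in> X" "y \<noteq> x" for r y
    unfolding B_eq by (rule smult_ind_span[OF SBd eBSB[OF that]])
  have Arel: "f \<in> triv_rel n psmult (pmult n \<delta>) M"
    if f: "f \<in> A" and eM: "\<And>r. psmult r (ind (eA n x y0)) \<in> M"
    for f :: "int set set \<Rightarrow> 'r" and M
  proof (rule span_rel[OF SAd])
    show "f \<in> span_of n SA" using f A_eq by simp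
    fix d c assume "d \<in> SA"
    then have d: "d \<in> diagrams n" "{x} \<in> d" unfolding SA_def by auto
    show "psmult c (ind d) \<in> triv_rel n psmult (pmult n \<delta>) M"
      by (rule SA_rel[OF d x y0 eM])
  qed
  have Brel: "f \<in> triv_rel n psmult (pmult n \<delta>) M"
    if f: "f \<in> B" and eM: "\<And>r y. y \<in> X \<Longrightarrow> y \<noteq> x \<Longrightarrow> psmult r (ind (eB n x y)) \<in> M"
    for f :: "int set set \<Rightarrow> 'r" and M
  proof (rule span_rel[OF SBd])
    show "f \<in> span_of n SB" using f B_eq by simp
    fix d c assume "d \<in> SB"
    then obtain y Bl where d: "d \<in> diagrams n" "y \<in> X" "y \<noteq> x" "Bl \<in> d" "x \<in> Bl" "y \<in> Bl"
      unfolding SB_def by blast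
    have yb: "1 \<le> y" "y \<le> int n" using Xb[OF d(2)] by auto
    show "psmult c (ind d) \<in> triv_rel n psmult (pmult n \<delta>) M"
      using SB_rel[OF d(1) d(4) d(5) d(6) x yb d(3)[symmetric] eM[OF d(2) d(3)]] .
  qed
  have J'T': "J' \<subseteq> T'" unfolding T'_eq by (rule setsum_sub1[OF sR1])
  have R1T': "R1 \<subseteq> T'" unfolding T'_eq by (rule setsum_sub2[OF sJ'])
  have JXT': "JX \<subseteq> T'"
  proof
    fix f assume f: "f \<in> JX"
    have "rA f \<in> R1" unfolding R1_def
      by (rule Arel[OF _ eAP]) (use split[OF f] in blast)
    moreover have "rB f \<in> R1" unfolding R1_def
      by (rule Brel[OF _ eBP]) (use split[OF f] in blast)+
    ultimately have "rA f + rB f \<in> T'" using R1T' subgrp_add[OF sR1] by blast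
    moreover have "f - rA f - rB f \<in> T'" using split[OF f] J'T' by blast
    ultimately have "(f - rA f - rB f) + (rA f + rB f) \<in> T'" using subgrp_add[OF sT'] by blast
    then show "f \<in> T'" by simp
  qed
  have TXT': "TX = T'"
  proof (intro equalityI subsetI)
    fix z assume "z \<in> TX"
    then obtain u v where "u \<in> JX" "v \<in> R1" "z = u + v" unfolding TX_eq setsum_mem by blast
    then show "z \<in> T'" using JXT' R1T' subgrp_add[OF sT'] by blast
  next
    fix z assume "z \<in> T'"
    then obtain u v where "u \<in> J'" "v \<in> R1" "z = u + v" unfolding T'_eq setsum_mem by blast
    moreover have "JX \<subseteq> TX" "R1 \<subseteq> TX" unfolding TX_eq
      using setsum_sub1[OF sR1] setsum_sub2[OF sJX] by auto
    ultimately show "z \<in> TX" using J'JX subgrp_add[OF sTX] by blast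
  qed
  define R2 where "R2 = triv_rel n sm2 (act2 n \<delta>) M1"
  define T1 where "T1 = triv_tensor n sm2 (act2 n \<delta>) M1 N1"
  have T1_eq: "T1 = setsum N1 R2" unfolding T1_def R2_def triv_tensor_def ..
  have R2M1: "R2 \<subseteq> M1" unfolding R2_def
  proof (rule triv_rel_sub[OF sM1])
    fix \<alpha> :: "int set set \<Rightarrow> 'r" and \<mu> assume \<alpha>: "\<alpha> \<in> PA n" and \<mu>: "\<mu> \<in> M1"
    have "psmult (eps n \<alpha>) (fst \<mu>) - pmult n \<delta> \<alpha> (fst \<mu>) \<in> A"
      using \<mu> c1 \<alpha> subgrp_diff[OF sA] unfolding M1_def left_submodule_def by auto
    moreover have "psmult (eps n \<alpha>) (snd \<mu>) - pmult n \<delta> \<alpha> (snd \<mu>) \<in> B"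
      using \<mu> c2 \<alpha> subgrp_diff[OF sB] unfolding M1_def left_submodule_def by auto
    ultimately show "sm2 (eps n \<alpha>) \<mu> - act2 n \<delta> \<alpha> \<mu> \<in> M1"
      unfolding M1_def sm2_def act2_def by simp
  qed
  have T1M1: "T1 \<subseteq> M1"
  proof
    fix z assume "z \<in> T1"
    then obtain u v where "u \<in> N1" "v \<in> R2" "z = u + v" unfolding T1_eq setsum_mem by blast
    then show "z \<in> M1" using N1M1 R2M1 subgrp_add[OF sM1] by blast
  qed
  have M1T1: "M1 \<subseteq> T1"
  proof
    fix p assume p: "p \<in> M1"
    have pa: "fst p \<in> A" and pb: "snd p \<in> B" using p unfolding M1_def by auto
    have "fst p \<in> triv_rel n psmult (pmult n \<delta>) A"
      by (rule Arel[OF pa eAA])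
    then have r1: "(fst p, 0) \<in> R2" unfolding R2_def M1_def
      by (rule rel_pair1) (rule subgrp_0[OF sB])
    have "snd p \<in> triv_rel n psmult (pmult n \<delta>) B"
      by (rule Brel[OF pb eBB])
    then have r2: "(0, snd p) \<in> R2" unfolding R2_def M1_def
      by (rule rel_pair2) (rule subgrp_0[OF sA])
    have "(fst p, 0) + (0, snd p) \<in> R2" unfolding R2_def using r1 r2 unfolding R2_def by (rule triv_rel_add)
    moreover have "(fst p, 0) + (0, snd p) = p" by (cases p) simp
    ultimately have "p \<in> R2" by simp
    then show "p \<in> T1" unfolding T1_eq using setsum_sub2[OF sN1] by blast
  qed
  have T1M: "T1 = M1" using T1M1 M1T1 by blast
  have quotM: "quot M1 T1 = {M1}"
  proof -
    have "coset M1 m = M1" if "m \<in> M1" for m using coset_self[OF sM1 that] .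
    moreover have "M1 \<noteq> {}" using subgrp_0[OF sM1] by blast
    ultimately show ?thesis unfolding quot_def T1M by auto
  qed
  have c8: "inj_on (induced g T') (quot M1 T1)" unfolding quotM by simp
  have T'self: "induced g T' M1 = T'"
  proof -
    have "(SOME m. m \<in> M1) \<in> M1" using subgrp_0[OF sM1] by (rule someI)
    then have "g (SOME m. m \<in> M1) \<in> T'" using gM1 JXT' by blast
    then show ?thesis unfolding induced_def by (rule coset_self[OF sT'])
  qed
  have c9: "induced g T' ` quot M1 T1 = {C \<in> quot P T'. induced id TX C = TX}"
  proof -
    have "{C \<in> quot P T'. induced id TX C = TX} = {T'}"
    proof (intro equalityI subsetI)
      fix C assume "C \<in> {C \<in> quot P T'. induced id TX C = TX}"
      then obtain f where f: "f \<in> P" "C = coset T' f" "induced id T' C = T'"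
        unfolding quot_mem TXT' by blast
      define t where "t = (SOME m. m \<in> C)"
      have tf: "t - f \<in> T'" unfolding t_def f(2) by (rule some_coset[OF sT'])
      have "coset T' t = T'" using f(3) unfolding induced_def t_def by simp
      then have "t \<in> T'" using coset_in[OF sT', of t] by simp
      then have "t - (t - f) \<in> T'" using tf subgrp_diff[OF sT'] by blast
      then have "f \<in> T'" by simp
      then show "C \<in> {T'}" using f(2) coset_self[OF sT'] by simp
    next
      fix C assume "C \<in> {T'}"
      then have C: "C = T'" by simp
      have "T' = coset T' 0" using coset_self[OF sT' subgrp_0[OF sT']] by simp
      moreover have "(0::int set set \<Rightarrow> 'r) \<in> P" using subgrp_0[OF sP] .
      ultimately have Tq: "T' \<in> quot P T'" unfolding quot_mem by blast
      have "(SOME m. m \<in> T') \<in> T'" using someI[of "\<lambda>m. m \<in> T'" 0] subgrp_0[OF sT'] by blast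
      then have "induced id T' T' = T'" unfolding induced_def id_def by (rule coset_self[OF sT'])
      with Tq show "C \<in> {C \<in> quot P T'. induced id TX C = TX}" using C TXT' by simp
    qed
    moreover have "induced g T' ` quot M1 T1 = {T'}" unfolding quotM using T'self by simp
    ultimately show ?thesis by simp
  qed
  have c10: "induced id TX ` quot P T' = quot P TX"
  proof -
    have "induced id T' (coset T' f) = coset T' f" for f by (rule induced_id[OF sT' sT']) simp
    then show ?thesis unfolding TXT' quot_def image_image by simp
  qed
  show ?thesis
    unfolding T'_def[symmetric] TX_def[symmetric] T1_def[symmetric]
    using c1 c2 c3 c4 c5 c6 c7 c8 c9 c10 by blast
qed


end
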